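(* Let $r_n:=|\mathfrak{A}_{2n+1}(2413,3142)|$ for $n\ge0$ and $R(x):=\sum_{n\ge1}r_nx^n$. Then $$R(x)=x(R(x)+1)^2+x(R(x)+1)^3.$$ Consequently $r_0=1$ and for $n\ge1$, $$r_n=\frac{2}{n}\sum_{i=0}^{n-1}2^i\binom{2n}{i}\binom{n}{i+1}.$$
   Context: $\mathfrak{A}_m(2413,3142)$ is the set of permutations $\pi$ of $[m]$ that are alternating (up-down), i.e. $\pi(1)<\pi(2)>\pi(3)<\pi(4)>\cdots$, and avoid both classical patterns $2413$ and $3142$. *)

theory Defs
  imports "HOL-Combinatorics.Permutations" "HOL-Computational_Algebra.Formal_Power_Series"
begin

definition alternating :: "nat \<Rightarrow> (nat \<Rightarrow> nat) \<Rightarrow> bool" where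
  "alternating m p \<longleftrightarrow>
     (\<forall>i. 1 \<le> i \<and> i < m \<longrightarrow> (if odd i then p i < p (Suc i) else p i > p (Suc i)))"

definition contains_pattern :: "nat \<Rightarrow> (nat \<Rightarrow> nat) \<Rightarrow> nat list \<Rightarrow> bool" where
  "contains_pattern m p tau \<longleftrightarrow>
     (\<exists>f :: nat \<Rightarrow> nat. strict_mono_on {..<length tau} f \<and> f ` {..<length tau} \<subseteq> {1..m} \<and>
        (\<forall>a < length tau. \<forall>b < length tau. p (f a) < p (f b) \<longleftrightarrow> tau ! a < tau ! b))"

definition Alt_avoid :: "nat \<Rightarrow> (nat \<Rightarrow> nat) set" where
  "Alt_avoid m = {p. p permutes {1..m} \<and> alternating m p \<and>
      \<not> contains_pattern m p [2,4,1,3] \<and> \<not> contains_pattern m p [3,1,4,2]}"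

definition r_seq :: "nat \<Rightarrow> nat" where
  "r_seq n = card (Alt_avoid (2 * n + 1))"

definition R_fps :: "int fps" where
  "R_fps = Abs_fps (\<lambda>n. if n = 0 then 0 else int (r_seq n))"

end

theory Submission
  imports Defs
begin


definition alt :: "nat \<Rightarrow> nat list \<Rightarrow> bool" where
  "alt b xs \<longleftrightarrow> (\<forall>i. Suc i < length xs \<longrightarrow> (xs!i < xs!Suc i \<longleftrightarrow> even (i+b)))"

definition sep :: "nat list \<Rightarrow> bool" where
  "sep xs \<longleftrightarrow> (\<forall>i j k l. i<j \<longrightarrow> j<k \<longrightarrow> k<l \<longrightarrow> l<length xs \<longrightarrow>
      \<not>(xs!k < xs!i \<and> xs!i < xs!l \<and> xs!l < xs!j) \<and> \<not>(xs!j < xs!l \<and> xs!l < xs!i \<and> xs!i < xs!k))"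

definition ssplit :: "nat list \<Rightarrow> nat \<Rightarrow> bool" where
  "ssplit xs k \<longleftrightarrow> 0<k \<and> k<length xs \<and> (\<forall>i j. i<k \<longrightarrow> k\<le>j \<longrightarrow> j<length xs \<longrightarrow> xs!i < xs!j)"

definition ksplit :: "nat list \<Rightarrow> nat \<Rightarrow> bool" where
  "ksplit xs k \<longleftrightarrow> 0<k \<and> k<length xs \<and> (\<forall>i j. i<k \<longrightarrow> k\<le>j \<longrightarrow> j<length xs \<longrightarrow> xs!i > xs!j)"

definition sumd :: "nat list \<Rightarrow> bool" where "sumd xs \<longleftrightarrow> (\<exists>k. ssplit xs k)"
definition skwd :: "nat list \<Rightarrow> bool" where "skwd xs \<longleftrightarrow> (\<exists>k. ksplit xs k)"

lemma sep_prefix: "sep (ys @ zs) \<Longrightarrow> sep ys"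
proof (unfold sep_def, intro allI impI)
  fix i j k l assume a: "\<forall>i j k l. i < j \<longrightarrow> j < k \<longrightarrow> k < l \<longrightarrow> l < length (ys @ zs) \<longrightarrow>
         \<not> ((ys @ zs) ! k < (ys @ zs) ! i \<and> (ys @ zs) ! i < (ys @ zs) ! l \<and> (ys @ zs) ! l < (ys @ zs) ! j) \<and>
         \<not> ((ys @ zs) ! j < (ys @ zs) ! l \<and> (ys @ zs) ! l < (ys @ zs) ! i \<and> (ys @ zs) ! i < (ys @ zs) ! k)"
    and h: "i < j" "j < k" "k < l" "l < length ys"
  have "l < length (ys @ zs)" using h by simp
  with a h have "\<not> ((ys @ zs) ! k < (ys @ zs) ! i \<and> (ys @ zs) ! i < (ys @ zs) ! l \<and> (ys @ zs) ! l < (ys @ zs) ! j) \<and>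
         \<not> ((ys @ zs) ! j < (ys @ zs) ! l \<and> (ys @ zs) ! l < (ys @ zs) ! i \<and> (ys @ zs) ! i < (ys @ zs) ! k)" by blast
  thus "\<not> (ys ! k < ys ! i \<and> ys ! i < ys ! l \<and> ys ! l < ys ! j) \<and> \<not> (ys ! j < ys ! l \<and> ys ! l < ys ! i \<and> ys ! i < ys ! k)"
    using h by (simp add: nth_append)
qed

lemma key_step_sum:
  assumes d: "distinct (ys @ [x])" and s: "sep (ys @ [x])" and sp: "ssplit ys k"
  shows "sumd (ys @ [x]) \<or> skwd (ys @ [x])"
proof -
  define n where "n = length ys"
  let ?xs = "ys @ [x]"
  have nx: "?xs ! n = x" unfolding n_def by simp
  have ny: "i < n \<Longrightarrow> ?xs ! i = ys ! i" for i unfolding n_def by (simp add: nth_append)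
  have kn: "0 < k" "k < n" and spl: "\<And>i j. i < k \<Longrightarrow> k \<le> j \<Longrightarrow> j < n \<Longrightarrow> ys!i < ys!j"
    using sp unfolding ssplit_def n_def by auto
  have xne: "i < n \<Longrightarrow> ys!i \<noteq> x" for i using d unfolding n_def by (auto simp: in_set_conv_nth)
  show ?thesis
  proof (cases "\<forall>i<k. ys!i < x")
    case True
    have "ssplit ?xs k" unfolding ssplit_def using kn True spl
      by (auto simp: nth_append n_def[symmetric] not_less less_Suc_eq)
    thus ?thesis unfolding sumd_def by blast
  next
    case False
    then obtain a0 where a0: "a0 < k" "x < ys!a0" using xne kn by (meson less_trans linorder_neqE_nat)
    show ?thesis
    proof (cases "\<forall>i<n. x < ys!i")
      case True
      have "ksplit ?xs n" unfolding ksplit_def using True kn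
        by (auto simp: nth_append n_def[symmetric])
      thus ?thesis unfolding skwd_def by blast
    next
      case False
      then obtain t where t: "t < n" "ys!t < x" using xne by (meson linorder_neqE_nat)
      have tk: "t < k"
      proof (rule ccontr)
        assume "\<not> t < k" hence "ys!a0 < ys!t" using spl[OF a0(1)] t(1) by simp
        thus False using a0 t by simp
      qed
      have LH: "x < ys!l" if "h < l" "l < k" "x < ys!h" for h l
      proof (rule ccontr)
        assume "\<not> x < ys!l" hence "ys!l < x" using xne[of l] that kn by auto
        moreover have "ys!h < ys!k" using spl[of h k] that kn by auto
        ultimately have "?xs!l < ?xs!n \<and> ?xs!n < ?xs!h \<and> ?xs!h < ?xs!k"
          using that kn by (simp add: ny nx)
        moreover have "h < l" "l < k" "k < n" "n < length ?xs" using that kn n_def by auto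
        ultimately show False using s unfolding sep_def by blast
      qed
      define k' where "k' = (LEAST i. x < ys!i)"
      have k'1: "x < ys!k'" unfolding k'_def by (rule LeastI[of _ a0]) (rule a0(2))
      have k'2: "k' \<le> a0" unfolding k'_def by (rule Least_le) (rule a0(2))
      have low: "ys!i < x" if "i < k'" for i
      proof -
        have "\<not> x < ys!i" using not_less_Least[OF that[unfolded k'_def]] .
        thus ?thesis using xne[of i] that k'2 a0 kn by auto
      qed
      have high: "x < ys!i" if "k' \<le> i" "i < k" for i
        using LH[of k' i] k'1 that by (cases "i = k'") auto
      have "t < k'" using high[of t] t tk by (meson leI less_asym)
      have "ssplit ?xs k'"
        unfolding ssplit_def
      proof (intro conjI allI impI)
        show "0 < k'" using \<open>t < k'\<close> by simp
        show "k' < length ?xs" using k'2 a0 kn by (simp add: n_def)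
        fix i j assume ij: "i < k'" "k' \<le> j" "j < length ?xs"
        have i: "?xs!i = ys!i" using ij k'2 a0 kn by (simp add: ny)
        show "?xs!i < ?xs!j"
        proof (cases "j = n")
          case True thus ?thesis using i nx low[OF ij(1)] by simp
        next
          case False
          hence jn: "j < n" using ij n_def by simp
          show ?thesis
          proof (cases "j < k")
            case True thus ?thesis using i ny[OF jn] low[OF ij(1)] high[OF ij(2) True] by simp
          next
            case False thus ?thesis using i ny[OF jn] spl[of i j] ij k'2 a0 jn by simp
          qed
        qed
      qed
      thus ?thesis unfolding sumd_def by blast
    qed
  qed
qed

lemma key_step_skew:
  assumes d: "distinct (ys @ [x])" and s: "sep (ys @ [x])" and sp: "ksplit ys k"
  shows "sumd (ys @ [x]) \<or> skwd (ys @ [x])"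
proof -
  define n where "n = length ys"
  let ?xs = "ys @ [x]"
  have nx: "?xs ! n = x" unfolding n_def by simp
  have ny: "i < n \<Longrightarrow> ?xs ! i = ys ! i" for i unfolding n_def by (simp add: nth_append)
  have kn: "0 < k" "k < n" and spl: "\<And>i j. i < k \<Longrightarrow> k \<le> j \<Longrightarrow> j < n \<Longrightarrow> ys!j < ys!i"
    using sp unfolding ksplit_def n_def by auto
  have xne: "i < n \<Longrightarrow> ys!i \<noteq> x" for i using d unfolding n_def by (auto simp: in_set_conv_nth)
  show ?thesis
  proof (cases "\<forall>i<k. x < ys!i")
    case True
    have "ksplit ?xs k" unfolding ksplit_def using kn True spl
      by (auto simp: nth_append n_def[symmetric] not_less less_Suc_eq)
    thus ?thesis unfolding skwd_def by blast
  next
    case False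
    then obtain a0 where a0: "a0 < k" "ys!a0 < x" using xne kn by (meson less_trans linorder_neqE_nat)
    show ?thesis
    proof (cases "\<forall>i<n. ys!i < x")
      case True
      have "ssplit ?xs n" unfolding ssplit_def using True kn
        by (auto simp: nth_append n_def[symmetric])
      thus ?thesis unfolding sumd_def by blast
    next
      case False
      then obtain t where t: "t < n" "x < ys!t" using xne by (meson linorder_neqE_nat)
      have tk: "t < k"
      proof (rule ccontr)
        assume "\<not> t < k" hence "ys!t < ys!a0" using spl[OF a0(1)] t(1) by simp
        thus False using a0 t by simp
      qed
      have LH: "ys!l < x" if "h < l" "l < k" "ys!h < x" for h l
      proof (rule ccontr)
        assume "\<not> ys!l < x" hence "x < ys!l" using xne[of l] that kn by auto
        moreover have "ys!k < ys!h" using spl[of h k] that kn by auto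
        ultimately have "?xs!k < ?xs!h \<and> ?xs!h < ?xs!n \<and> ?xs!n < ?xs!l"
          using that kn by (simp add: ny nx)
        moreover have "h < l" "l < k" "k < n" "n < length ?xs" using that kn n_def by auto
        ultimately show False using s unfolding sep_def by blast
      qed
      define k' where "k' = (LEAST i. ys!i < x)"
      have k'1: "ys!k' < x" unfolding k'_def by (rule LeastI[of _ a0]) (rule a0(2))
      have k'2: "k' \<le> a0" unfolding k'_def by (rule Least_le) (rule a0(2))
      have low: "x < ys!i" if "i < k'" for i
      proof -
        have "\<not> ys!i < x" using not_less_Least[OF that[unfolded k'_def]] .
        thus ?thesis using xne[of i] that k'2 a0 kn by auto
      qed
      have high: "ys!i < x" if "k' \<le> i" "i < k" for i
        using LH[of k' i] k'1 that by (cases "i = k'") auto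
      have "t < k'" using high[of t] t tk by (meson leI less_asym)
      have "ksplit ?xs k'"
        unfolding ksplit_def
      proof (intro conjI allI impI)
        show "0 < k'" using \<open>t < k'\<close> by simp
        show "k' < length ?xs" using k'2 a0 kn by (simp add: n_def)
        fix i j assume ij: "i < k'" "k' \<le> j" "j < length ?xs"
        have i: "?xs!i = ys!i" using ij k'2 a0 kn by (simp add: ny)
        show "?xs!j < ?xs!i"
        proof (cases "j = n")
          case True thus ?thesis using i nx low[OF ij(1)] by simp
        next
          case False
          hence jn: "j < n" using ij n_def by simp
          show ?thesis
          proof (cases "j < k")
            case True thus ?thesis using i ny[OF jn] low[OF ij(1)] high[OF ij(2) True] by simp
          next
            case False thus ?thesis using i ny[OF jn] spl[of i j] ij k'2 a0 jn by simp
          qed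
        qed
      qed
      thus ?thesis unfolding skwd_def by blast
    qed
  qed
qed

lemma key:
  assumes "distinct xs" "sep xs" "2 \<le> length xs"
  shows "sumd xs \<or> skwd xs"
  using assms
proof (induction xs rule: rev_induct)
  case Nil thus ?case by simp
next
  case (snoc x ys)
  show ?case
  proof (cases "length ys = 1")
    case True
    then obtain a where ys: "ys = [a]" by (cases ys) auto
    have "a \<noteq> x" using snoc.prems ys by simp
    hence "ssplit (ys @ [x]) 1 \<or> ksplit (ys @ [x]) 1" unfolding ssplit_def ksplit_def ys
      by (auto simp: nth_append less_Suc_eq)
    thus ?thesis unfolding sumd_def skwd_def by blast
  next
    case False
    hence "2 \<le> length ys" using snoc.prems by simp
    moreover have "distinct ys" "sep ys" using snoc.prems sep_prefix by auto
    ultimately have "sumd ys \<or> skwd ys" using snoc.IH by blast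
    thus ?thesis using key_step_sum key_step_skew snoc.prems unfolding sumd_def skwd_def by blast
  qed
qed

definition perms :: "nat \<Rightarrow> nat list set" where
  "perms m = {xs. distinct xs \<and> set xs = {0..<m}}"

lemma perms_len: "xs \<in> perms m \<Longrightarrow> length xs = m"
  unfolding perms_def using distinct_card by fastforce

lemma finite_perms: "finite (perms m)"
proof -
  have "perms m \<subseteq> {xs. set xs \<subseteq> {0..<m} \<and> length xs = m}" using perms_len unfolding perms_def by auto
  moreover have "finite {xs. set xs \<subseteq> {0..<m} \<and> length xs = m}" by (rule finite_lists_length_eq) simp
  ultimately show ?thesis by (rule finite_subset)
qed

definition UC :: "nat \<Rightarrow> nat \<Rightarrow> nat list set" where "UC b m = {xs \<in> perms m. alt b xs \<and> sep xs}"
definition PC :: "nat \<Rightarrow> nat \<Rightarrow> nat list set" where "PC b m = {xs \<in> UC b m. sumd xs}"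
definition KC :: "nat \<Rightarrow> nat \<Rightarrow> nat list set" where "KC b m = {xs \<in> UC b m. skwd xs}"

lemma finite_UC: "finite (UC b m)" unfolding UC_def using finite_perms by simp
lemma finite_PC: "finite (PC b m)" unfolding PC_def using finite_UC by simp
lemma finite_KC: "finite (KC b m)" unfolding KC_def using finite_UC by simp

lemma not_sumd_skwd: "ssplit xs k1 \<Longrightarrow> ksplit xs k2 \<Longrightarrow> False"
  unfolding ssplit_def ksplit_def
  by (metis diff_less less_imp_diff_less not_less not_less0 less_asym zero_less_one less_Suc_eq_le Suc_pred less_trans_Suc)

lemma perms_1: "perms 1 = {[0]}"
proof -
  have "xs \<in> perms 1 \<longleftrightarrow> xs = [0]" for xs
  proof
    assume a: "xs \<in> perms 1"
    hence "length xs = 1" by (rule perms_len)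
    then obtain a where "xs = [a]" by (cases xs) auto
    thus "xs = [0]" using a unfolding perms_def by auto
  qed (simp add: perms_def)
  thus ?thesis by auto
qed

lemma F1:
  assumes "m \<ge> 1"
  shows "card (UC b m) = (if m = 1 then 1 else 0) + card (PC b m) + card (KC b m)"
proof (cases "m = 1")
  case True
  have "UC b m = {[0]}" unfolding UC_def True perms_1 by (auto simp: alt_def sep_def)
  moreover have "PC b m = {}" "KC b m = {}" unfolding PC_def KC_def \<open>UC b m = {[0]}\<close>
    by (auto simp: sumd_def skwd_def ssplit_def ksplit_def)
  ultimately show ?thesis using True by simp
next
  case False
  hence m2: "m \<ge> 2" using assms by simp
  have "UC b m = PC b m \<union> KC b m"
  proof -
    have "xs \<in> UC b m \<Longrightarrow> sumd xs \<or> skwd xs" for xs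
      using key[of xs] perms_len[of xs m] m2 unfolding UC_def perms_def by auto
    thus ?thesis unfolding PC_def KC_def by auto
  qed
  moreover have "PC b m \<inter> KC b m = {}" unfolding PC_def KC_def sumd_def skwd_def
    using not_sumd_skwd by blast
  ultimately show ?thesis using False finite_PC finite_KC by (simp add: card_Un_disjoint)
qed

definition cm :: "nat \<Rightarrow> nat list \<Rightarrow> nat list" where "cm m xs = map (\<lambda>v. m - Suc v) xs"

lemma cm_lt: "a < m \<Longrightarrow> c < m \<Longrightarrow> (m - Suc a < m - Suc c) \<longleftrightarrow> c < a" by auto

lemma perms_lt: "xs \<in> perms m \<Longrightarrow> i < length xs \<Longrightarrow> xs!i < m"
  unfolding perms_def using nth_mem by fastforce

lemma cm_perms: "xs \<in> perms m \<Longrightarrow> cm m xs \<in> perms m"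
proof -
  assume a: "xs \<in> perms m"
  have inj: "inj_on (\<lambda>v. m - Suc v) {0..<m}" by (auto simp: inj_on_def)
  have "(\<lambda>v. m - Suc v) ` {0..<m} = {0..<m}"
  proof
    show "{0..<m} \<subseteq> (\<lambda>v. m - Suc v) ` {0..<m}"
    proof
      fix y assume "y \<in> {0..<m}" thus "y \<in> (\<lambda>v. m - Suc v) ` {0..<m}"
        by (intro image_eqI[of _ _ "m - Suc y"]) auto
    qed
  qed auto
  thus ?thesis using a inj unfolding perms_def cm_def
    by (auto simp: distinct_map)
qed

lemma cm_cm: "xs \<in> perms m \<Longrightarrow> cm m (cm m xs) = xs"
  unfolding cm_def perms_def by (auto intro!: map_idI)

lemma cm_nth: "i < length xs \<Longrightarrow> cm m xs ! i = m - Suc (xs!i)" unfolding cm_def by simp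

lemma cm_alt: assumes "xs \<in> perms m" shows "alt b (cm m xs) \<longleftrightarrow> alt (Suc b) xs"
proof -
  have e: "(cm m xs ! i < cm m xs ! Suc i) \<longleftrightarrow> \<not> (xs ! i < xs ! Suc i)" if "Suc i < length xs" for i
  proof -
    have "xs!i \<noteq> xs!Suc i" using assms that unfolding perms_def by (simp add: nth_eq_iff_index_eq)
    thus ?thesis using that perms_lt[OF assms, of i] perms_lt[OF assms, of "Suc i"] by (auto simp: cm_nth)
  qed
  have "alt b (cm m xs) \<longleftrightarrow> (\<forall>i. Suc i < length xs \<longrightarrow> (\<not> (xs!i < xs!Suc i) \<longleftrightarrow> even (i+b)))"
    unfolding alt_def using e by (simp add: cm_def[symmetric]) (simp add: cm_def)
  also have "\<dots> \<longleftrightarrow> alt (Suc b) xs" unfolding alt_def by auto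
  finally show ?thesis .
qed

lemma cm_sep: assumes "xs \<in> perms m" shows "sep (cm m xs) \<longleftrightarrow> sep xs"
proof -
  have e: "(cm m xs ! i < cm m xs ! j) \<longleftrightarrow> xs ! j < xs ! i" if "i < length xs" "j < length xs" for i j
    using that perms_lt[OF assms, of i] perms_lt[OF assms, of j] by (auto simp: cm_nth)
  show ?thesis unfolding sep_def
  proof (intro iffI allI impI)
    fix i j k l assume a: "\<forall>i j k l. i < j \<longrightarrow> j < k \<longrightarrow> k < l \<longrightarrow> l < length (cm m xs) \<longrightarrow>
        \<not> (cm m xs ! k < cm m xs ! i \<and> cm m xs ! i < cm m xs ! l \<and> cm m xs ! l < cm m xs ! j) \<and>
        \<not> (cm m xs ! j < cm m xs ! l \<and> cm m xs ! l < cm m xs ! i \<and> cm m xs ! i < cm m xs ! k)"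
      and h: "i < j" "j < k" "k < l" "l < length xs"
    from a h have "\<not> (cm m xs ! k < cm m xs ! i \<and> cm m xs ! i < cm m xs ! l \<and> cm m xs ! l < cm m xs ! j) \<and>
        \<not> (cm m xs ! j < cm m xs ! l \<and> cm m xs ! l < cm m xs ! i \<and> cm m xs ! i < cm m xs ! k)"
      unfolding cm_def by auto
    thus "\<not> (xs ! k < xs ! i \<and> xs ! i < xs ! l \<and> xs ! l < xs ! j) \<and>
          \<not> (xs ! j < xs ! l \<and> xs ! l < xs ! i \<and> xs ! i < xs ! k)"
      using h by (simp add: e) blast
  next
    fix i j k l assume a: "\<forall>i j k l. i < j \<longrightarrow> j < k \<longrightarrow> k < l \<longrightarrow> l < length xs \<longrightarrow>
        \<not> (xs ! k < xs ! i \<and> xs ! i < xs ! l \<and> xs ! l < xs ! j) \<and>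
        \<not> (xs ! j < xs ! l \<and> xs ! l < xs ! i \<and> xs ! i < xs ! k)"
      and h: "i < j" "j < k" "k < l" "l < length (cm m xs)"
    from a h have "\<not> (xs ! k < xs ! i \<and> xs ! i < xs ! l \<and> xs ! l < xs ! j) \<and>
        \<not> (xs ! j < xs ! l \<and> xs ! l < xs ! i \<and> xs ! i < xs ! k)"
      unfolding cm_def by auto
    then show "\<not> (cm m xs ! k < cm m xs ! i \<and> cm m xs ! i < cm m xs ! l \<and> cm m xs ! l < cm m xs ! j) \<and>
          \<not> (cm m xs ! j < cm m xs ! l \<and> cm m xs ! l < cm m xs ! i \<and> cm m xs ! i < cm m xs ! k)"
    proof -
      have hl: "l < length xs" using h by (simp add: cm_def)
      show ?thesis using \<open>\<not> (xs ! k < xs ! i \<and> _) \<and> _\<close> h hl by (simp add: e) blast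
    qed
  qed
qed

lemma cm_skwd: assumes "xs \<in> perms m" shows "skwd (cm m xs) \<longleftrightarrow> sumd xs"
proof -
  have e: "(cm m xs ! j < cm m xs ! i) \<longleftrightarrow> xs ! i < xs ! j" if "i < length xs" "j < length xs" for i j
    using that perms_lt[OF assms, of i] perms_lt[OF assms, of j] by (auto simp: cm_nth)
  have L: "length (cm m xs) = length xs" by (simp add: cm_def)
  have "ksplit (cm m xs) k \<longleftrightarrow> ssplit xs k" for k
    unfolding ksplit_def ssplit_def L
  proof (intro conj_cong refl iffI allI impI)
    fix i j assume "\<forall>i j. i < k \<longrightarrow> k \<le> j \<longrightarrow> j < length xs \<longrightarrow> cm m xs ! j < cm m xs ! i" "i < k" "k \<le> j" "j < length xs"
    thus "xs ! i < xs ! j" using e[of i j] by auto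
  next
    fix i j assume "\<forall>i j. i < k \<longrightarrow> k \<le> j \<longrightarrow> j < length xs \<longrightarrow> xs ! i < xs ! j" "i < k" "k \<le> j" "j < length xs"
    thus "cm m xs ! j < cm m xs ! i" using e[of i j] by auto
  qed
  thus ?thesis unfolding skwd_def sumd_def by auto
qed

lemma F3: "card (KC b m) = card (PC (Suc b) m)"
proof -
  have "KC b m = cm m ` PC (Suc b) m"
  proof
    show "KC b m \<subseteq> cm m ` PC (Suc b) m"
    proof
      fix xs assume a: "xs \<in> KC b m"
      hence p: "xs \<in> perms m" unfolding KC_def UC_def by simp
      have "cm m xs \<in> PC (Suc b) m" using a p cm_perms[OF p] cm_alt[OF cm_perms[OF p]] cm_sep[OF cm_perms[OF p]]
          cm_skwd[OF cm_perms[OF p]] cm_cm[OF p] unfolding KC_def PC_def UC_def by auto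
      moreover have "xs = cm m (cm m xs)" using cm_cm[OF p] by simp
      ultimately show "xs \<in> cm m ` PC (Suc b) m" by blast
    qed
  next
    show "cm m ` PC (Suc b) m \<subseteq> KC b m"
    proof
      fix ys assume "ys \<in> cm m ` PC (Suc b) m"
      then obtain xs where a: "xs \<in> PC (Suc b) m" "ys = cm m xs" by blast
      hence p: "xs \<in> perms m" unfolding PC_def UC_def by simp
      show "ys \<in> KC b m" using a p cm_perms[OF p] cm_alt[OF p] cm_sep[OF p] cm_skwd[OF p]
        unfolding KC_def PC_def UC_def by auto
    qed
  qed
  moreover have "inj_on (cm m) (PC (Suc b) m)"
    by (rule inj_on_inverseI[where g="cm m"]) (auto simp: PC_def UC_def cm_cm)
  ultimately show ?thesis by (simp add: card_image)
qed

lemma alt_SS: "alt (Suc (Suc b)) = alt b" unfolding alt_def by auto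

lemma sep_sub:
  assumes s: "sep xs" and f1: "\<forall>i<length ys. f i < length xs"
    and f2: "\<forall>i j. i < j \<longrightarrow> j < length ys \<longrightarrow> f i < f j"
    and f3: "\<forall>i<length ys. \<forall>j<length ys. ys!i < ys!j \<longleftrightarrow> xs!(f i) < xs!(f j)"
  shows "sep ys"
  unfolding sep_def
proof (intro allI impI)
  fix i j k l assume h: "i < j" "j < k" "k < l" "l < length ys"
  have "f i < f j" "f j < f k" "f k < f l" "f l < length xs" using h f1 f2 by auto
  hence "\<not>(xs!f k < xs!f i \<and> xs!f i < xs!f l \<and> xs!f l < xs!f j) \<and> \<not>(xs!f j < xs!f l \<and> xs!f l < xs!f i \<and> xs!f i < xs!f k)"
    using s unfolding sep_def by blast
  moreover have "i < length ys" "j < length ys" "k < length ys" using h by auto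
  ultimately show "\<not>(ys!k < ys!i \<and> ys!i < ys!l \<and> ys!l < ys!j) \<and> \<not>(ys!j < ys!l \<and> ys!l < ys!i \<and> ys!i < ys!k)"
    using f3 h by simp
qed

lemma sep_take: "sep xs \<Longrightarrow> sep (take k xs)"
  by (rule sep_sub[where f=id]) auto

lemma sep_drop: "sep xs \<Longrightarrow> sep (drop k xs)"
  by (rule sep_sub[where f="\<lambda>i. i + k"]) (auto simp: add.commute)

lemma sep_map_add: "sep xs \<Longrightarrow> sep (map (\<lambda>v. v + c) xs)"
  by (rule sep_sub[where f=id]) auto

lemma sep_map_sub: "sep xs \<Longrightarrow> \<forall>v\<in>set xs. c \<le> v \<Longrightarrow> sep (map (\<lambda>v. v - c) xs)"
proof -
  assume s: "sep xs" and c: "\<forall>v\<in>set xs. c \<le> v"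
  have "\<forall>i<length xs. c \<le> xs!i" using c by simp
  thus ?thesis by (intro sep_sub[OF s, where f=id]) auto
qed

lemma alt_take: "alt b xs \<Longrightarrow> alt b (take k xs)"
  unfolding alt_def by auto

lemma alt_drop: "alt b xs \<Longrightarrow> alt (b + k) (drop k xs)"
  unfolding alt_def by (auto simp: add.commute add.left_commute)

lemma alt_map_add: "alt b (map (\<lambda>v. v + c) xs) \<longleftrightarrow> alt b xs"
  unfolding alt_def by auto

lemma alt_map_sub: "\<forall>v\<in>set xs. c \<le> v \<Longrightarrow> alt b (map (\<lambda>v. v - c) xs) \<longleftrightarrow> alt b xs"
proof -
  assume c: "\<forall>v\<in>set xs. c \<le> v"
  have e: "(xs!i - c < xs!Suc i - c) \<longleftrightarrow> xs!i < xs!Suc i" if "Suc i < length xs" for i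
  proof -
    have "c \<le> xs!i" "c \<le> xs!Suc i" using c that by auto
    thus ?thesis by linarith
  qed
  show ?thesis unfolding alt_def using e by simp
qed

lemma sep_join:
  assumes sp: "\<forall>i j. i<k \<longrightarrow> k \<le> j \<longrightarrow> j < length xs \<longrightarrow> xs!i < xs!j"
    and s1: "sep (take k xs)" and s2: "sep (drop k xs)"
  shows "sep xs"
  unfolding sep_def
proof (intro allI impI)
  fix i j kk l assume h: "i < j" "j < kk" "kk < l" "l < length xs"
  show "\<not>(xs!kk < xs!i \<and> xs!i < xs!l \<and> xs!l < xs!j) \<and> \<not>(xs!j < xs!l \<and> xs!l < xs!i \<and> xs!i < xs!kk)"
  proof (cases "l < k")
    case True
    hence "\<not>(take k xs!kk < take k xs!i \<and> take k xs!i < take k xs!l \<and> take k xs!l < take k xs!j) \<and>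
      \<not>(take k xs!j < take k xs!l \<and> take k xs!l < take k xs!i \<and> take k xs!i < take k xs!kk)"
      using s1 h unfolding sep_def by auto
    thus ?thesis using True h by simp
  next
    case False
    show ?thesis
    proof (cases "k \<le> i")
      case True
      have l2: "i-k < j-k" "j-k < kk-k" "kk-k < l-k" "l-k < length (drop k xs)" using h True by auto
      have "\<not>(drop k xs!(kk-k) < drop k xs!(i-k) \<and> drop k xs!(i-k) < drop k xs!(l-k) \<and> drop k xs!(l-k) < drop k xs!(j-k)) \<and>
        \<not>(drop k xs!(j-k) < drop k xs!(l-k) \<and> drop k xs!(l-k) < drop k xs!(i-k) \<and> drop k xs!(i-k) < drop k xs!(kk-k))"
        using s2 l2 unfolding sep_def by blast
      thus ?thesis using True h by simp
    next
      case False
      hence ik: "i < k" by simp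
      have kl: "k \<le> l" using \<open>\<not> l < k\<close> by simp
      have a: "xs!i < xs!l" using sp ik kl h by blast
      show ?thesis
      proof (cases "k \<le> kk")
        case True
        have "xs!i < xs!kk" using sp ik True h by auto
        thus ?thesis using a by auto
      next
        case False
        have "k \<le> l" "j < k" using kl False h by auto
        hence "xs!j < xs!l" using sp h by blast
        thus ?thesis using a by auto
      qed
    qed
  qed
qed

definition jn :: "nat \<Rightarrow> nat list \<Rightarrow> nat list \<Rightarrow> nat list" where
  "jn k s t = s @ map (\<lambda>v. v + k) t"

lemma downclosed:
  assumes "S \<subseteq> {0..<m}" "\<forall>v\<in>S. \<forall>w<v. w \<in> S" "card S = k"
  shows "S = {0..<k}"
proof -
  have fin: "finite S" using assms(1) finite_subset by blast
  have "S \<subseteq> {0..<k}"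
  proof
    fix v assume v: "v \<in> S"
    have "{0..v} \<subseteq> S" using v assms(2) by (auto simp: le_less)
    hence "card {0..v} \<le> card S" using fin by (rule card_mono[rotated])
    thus "v \<in> {0..<k}" using assms(3) by simp
  qed
  moreover have "card S = card {0..<k}" using assms(3) by simp
  ultimately show ?thesis using card_subset_eq[of "{0..<k}" S] by simp
qed

definition Dk :: "nat \<Rightarrow> nat \<Rightarrow> nat \<Rightarrow> nat list set" where
  "Dk b m k = {xs \<in> PC b m. ssplit xs k \<and> (\<forall>k'<k. \<not> ssplit xs k')}"

lemma jn_nth1: "length s = k \<Longrightarrow> i < k \<Longrightarrow> jn k s t ! i = s ! i"
  unfolding jn_def by (simp add: nth_append)

lemma jn_nth2: "length s = k \<Longrightarrow> k \<le> i \<Longrightarrow> i < k + length t \<Longrightarrow> jn k s t ! i = t ! (i - k) + k"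
  unfolding jn_def by (simp add: nth_append)

lemma jn_in:
  assumes k: "0 < k" "k < m" and ev: "even (k - 1 + b)"
    and s: "s \<in> UC b k - PC b k" and t: "t \<in> UC (b+k) (m-k)"
  shows "jn k s t \<in> Dk b m k"
proof -
  have sp: "s \<in> perms k" "alt b s" "sep s" "\<not> sumd s" using s unfolding UC_def PC_def by auto
  have tp: "t \<in> perms (m-k)" "alt (b+k) t" "sep t" using t unfolding UC_def by auto
  have ls: "length s = k" using perms_len[OF sp(1)] .
  have lt: "length t = m - k" using perms_len[OF tp(1)] .
  have sv: "i < k \<Longrightarrow> s!i < k" for i using perms_lt[OF sp(1)] ls by simp
  have tv: "i < m - k \<Longrightarrow> t!i < m - k" for i using perms_lt[OF tp(1)] lt by simp
  let ?x = "jn k s t"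
  have lx: "length ?x = m" unfolding jn_def using ls lt k by simp
  have x1: "i < k \<Longrightarrow> ?x ! i = s ! i" for i using jn_nth1[OF ls] .
  have x2: "k \<le> i \<Longrightarrow> i < m \<Longrightarrow> ?x ! i = t ! (i - k) + k" for i using jn_nth2[OF ls, of i t] lt k by simp
  have perm: "?x \<in> perms m"
  proof -
    have "distinct (map (\<lambda>v. v + k) t)" using tp(1) unfolding perms_def by (simp add: distinct_map)
    moreover have "set s \<inter> set (map (\<lambda>v. v + k) t) = {}" using sp(1) unfolding perms_def by auto
    moreover have "set s \<union> (\<lambda>v. v + k) ` set t = {0..<m}"
    proof -
      have "(\<lambda>v. v + k) ` {0..<m-k} = {k..<m}"
      proof
        show "{k..<m} \<subseteq> (\<lambda>v. v + k) ` {0..<m-k}"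
        proof
          fix y assume "y \<in> {k..<m}" thus "y \<in> (\<lambda>v. v + k) ` {0..<m-k}"
            by (intro image_eqI[of _ _ "y - k"]) auto
        qed
      qed auto
      thus ?thesis using sp(1) tp(1) k unfolding perms_def by auto
    qed
    ultimately show ?thesis using sp(1) unfolding perms_def jn_def by auto
  qed
  have split: "\<forall>i j. i<k \<longrightarrow> k \<le> j \<longrightarrow> j < length ?x \<longrightarrow> ?x!i < ?x!j"
    using x1 x2 sv lx by fastforce
  have alt: "alt b ?x"
    unfolding alt_def
  proof (intro allI impI)
    fix i assume i: "Suc i < length ?x"
    show "(?x!i < ?x!Suc i) \<longleftrightarrow> even (i + b)"
    proof (cases "Suc i < k")
      case True thus ?thesis using sp(2) x1 ls unfolding alt_def by simp
    next
      case False
      show ?thesis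
      proof (cases "Suc i = k")
        case True
        have "?x!i < ?x!Suc i" using split True i by auto
        moreover have "i = k - 1" using True by simp
        ultimately show ?thesis using ev by (simp add: add.commute)
      next
        case False
        hence ki: "k \<le> i" using \<open>\<not> Suc i < k\<close> by simp
        have "Suc (i - k) < length t" using i lx lt ki k by simp
        hence "(t!(i-k) < t!Suc (i-k)) \<longleftrightarrow> even (i - k + (b + k))" using tp(2) unfolding alt_def by blast
        moreover have "i - k + (b + k) = i + b" using ki by simp
        moreover have "Suc (i - k) = Suc i - k" using ki by simp
        ultimately show ?thesis using x2[of i] x2[of "Suc i"] ki i lx by simp
      qed
    qed
  qed
  have "take k ?x = s" unfolding jn_def using ls by simp
  moreover have "drop k ?x = map (\<lambda>v. v + k) t" unfolding jn_def using ls by simp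
  ultimately have sep: "sep ?x" using sep_join[OF split] sp(3) sep_map_add[OF tp(3)] by simp
  have ssp: "ssplit ?x k" unfolding ssplit_def using split k lx by simp
  have minimal: "\<not> ssplit ?x k'" if "k' < k" for k'
  proof
    assume a: "ssplit ?x k'"
    have "ssplit s k'" unfolding ssplit_def
    proof (intro conjI allI impI)
      show "0 < k'" using a unfolding ssplit_def by simp
      show "k' < length s" using that ls by simp
      fix i j assume ij: "i < k'" "k' \<le> j" "j < length s"
      hence "?x!i < ?x!j" using a lx ls k unfolding ssplit_def by auto
      thus "s!i < s!j" using x1[of i] x1[of j] ij ls that by simp
    qed
    thus False using sp(4) unfolding sumd_def by blast
  qed
  show ?thesis unfolding Dk_def PC_def UC_def sumd_def using perm alt sep ssp minimal by blast
qed




lemma Dk_out: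
  assumes x: "xs \<in> Dk b m k"
  defines "s \<equiv> take k xs" and "t \<equiv> map (\<lambda>v. v - k) (drop k xs)"
  shows "even (k - 1 + b) \<and> s \<in> UC b k - PC b k \<and> t \<in> UC (b+k) (m-k) \<and> xs = jn k s t \<and> 0 < k \<and> k < m"
proof -
  have xp: "xs \<in> perms m" "alt b xs" "sep xs" "ssplit xs k" "\<forall>k'<k. \<not> ssplit xs k'"
    using x unfolding Dk_def PC_def UC_def by auto
  have lx: "length xs = m" using perms_len[OF xp(1)] .
  have k: "0 < k" "k < m" using xp(4) lx unfolding ssplit_def by auto
  have spl: "\<And>i j. i < k \<Longrightarrow> k \<le> j \<Longrightarrow> j < m \<Longrightarrow> xs!i < xs!j" using xp(4) lx unfolding ssplit_def by auto
  have dx: "distinct xs" and sx: "set xs = {0..<m}" using xp(1) unfolding perms_def by auto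
  have ls: "length s = k" unfolding s_def using k lx by simp
  have sub: "set s \<subseteq> {0..<m}" unfolding s_def sx[symmetric] by (rule set_take_subset)
  have setS: "set s = {0..<k}"
  proof (rule downclosed[of _ m])
    show "set s \<subseteq> {0..<m}" by (rule sub)
    have "distinct s" unfolding s_def using dx by simp
    thus "card (set s) = k" using ls distinct_card[of s] by simp
    show "\<forall>v\<in>set s. \<forall>w<v. w \<in> set s"
    proof (intro ballI allI impI)
      fix v w assume v: "v \<in> set s" and w: "w < v"
      obtain i where i: "i < length (take k xs)" "take k xs!i = v" using v unfolding s_def by (auto simp: in_set_conv_nth)
      hence i: "i < k" "xs!i = v" by auto
      have "w \<in> set xs" using sx v w sub by auto
      then obtain j where j: "j < m" "xs!j = w" using lx by (auto simp: in_set_conv_nth)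
      have "j < k"
      proof (rule ccontr)
        assume "\<not> j < k" hence "xs!i < xs!j" using spl[of i j] i j by simp
        thus False using i j w by simp
      qed
      hence "take k xs ! j = w" using j by simp
      moreover have "j < length (take k xs)" using \<open>j < k\<close> j lx by simp
      ultimately show "w \<in> set s" unfolding s_def by (metis nth_mem)
    qed
  qed
  have sd: "distinct s" unfolding s_def using dx by simp
  have setD: "set (drop k xs) = {k..<m}"
  proof -
    have "set s \<union> set (drop k xs) = {0..<m}" unfolding s_def using sx by (metis set_append append_take_drop_id)
    moreover have "set s \<inter> set (drop k xs) = {}" unfolding s_def using dx by (metis distinct_append append_take_drop_id)
    ultimately have "set (drop k xs) = {0..<m} - {0..<k}" using setS by blast
    thus ?thesis by auto
  qed
  have dd: "distinct (drop k xs)" using dx by simp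
  have ge: "\<forall>v\<in>set (drop k xs). k \<le> v" using setD by simp
  have tperm: "t \<in> perms (m - k)"
  proof -
    have "inj_on (\<lambda>v. v - k) (set (drop k xs))" unfolding setD by (auto simp: inj_on_def)
    hence "distinct t" unfolding t_def using dd by (simp add: distinct_map)
    moreover have "set t = {0..<m-k}"
    proof -
      have "(\<lambda>v. v - k) ` {k..<m} = {0..<m-k}"
      proof
        show "{0..<m-k} \<subseteq> (\<lambda>v. v - k) ` {k..<m}"
        proof
          fix y assume "y \<in> {0..<m-k}" thus "y \<in> (\<lambda>v. v - k) ` {k..<m}"
            by (intro image_eqI[of _ _ "y + k"]) auto
        qed
      qed auto
      thus ?thesis unfolding t_def using setD by simp
    qed
    ultimately show ?thesis unfolding perms_def by simp
  qed
  have eq: "xs = jn k s t"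
  proof -
    have "map (\<lambda>v. v + k) t = drop k xs" unfolding t_def using ge by (simp add: map_idI)
    thus ?thesis unfolding jn_def s_def by simp
  qed
  have ev: "even (k - 1 + b)"
  proof -
    have "xs!(k-1) < xs!Suc (k-1)" using spl[of "k-1" k] k by simp
    moreover have "Suc (k-1) < length xs" using k lx by simp
    ultimately show ?thesis using xp(2) unfolding alt_def by (simp add: add.commute)
  qed
  have "s \<in> UC b k" unfolding UC_def perms_def s_def
    using sd setS alt_take[OF xp(2)] sep_take[OF xp(3)] unfolding s_def by simp
  moreover have "s \<notin> PC b k"
  proof
    assume "s \<in> PC b k"
    then obtain k' where k': "ssplit s k'" unfolding PC_def sumd_def by blast
    have "ssplit xs k'" unfolding ssplit_def
    proof (intro conjI allI impI)
      show "0 < k'" "k' < length xs" using k' ls k lx unfolding ssplit_def by auto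
      fix i j assume ij: "i < k'" "k' \<le> j" "j < length xs"
      have kk: "k' < k" using k' ls unfolding ssplit_def by simp
      show "xs!i < xs!j"
      proof (cases "j < k")
        case True
        hence "s!i < s!j" using k' ij ls unfolding ssplit_def by auto
        thus ?thesis using True ij kk unfolding s_def by simp
      next
        case False thus ?thesis using spl[of i j] ij kk lx by simp
      qed
    qed
    moreover have "k' < k" using k' ls unfolding ssplit_def by simp
    ultimately show False using xp(5) by blast
  qed
  moreover have "t \<in> UC (b+k) (m-k)"
    unfolding UC_def using tperm alt_drop[OF xp(2), of k] sep_map_sub[OF sep_drop[OF xp(3)] ge]
      alt_map_sub[OF ge] unfolding t_def by simp
  ultimately show ?thesis using ev eq k by simp
qed

lemma Dk_card:
  assumes k: "0 < k" "k < m"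
  shows "card (Dk b m k) = (if even (k - 1 + b) then card (UC b k - PC b k) * card (UC (b+k) (m-k)) else 0)"
proof (cases "even (k - 1 + b)")
  case True
  have eq: "Dk b m k = (\<lambda>(s,t). jn k s t) ` ((UC b k - PC b k) \<times> UC (b+k) (m-k))"
  proof
    show "Dk b m k \<subseteq> (\<lambda>(s,t). jn k s t) ` ((UC b k - PC b k) \<times> UC (b+k) (m-k))"
    proof
      fix xs assume "xs \<in> Dk b m k"
      from Dk_out[OF this] show "xs \<in> (\<lambda>(s,t). jn k s t) ` ((UC b k - PC b k) \<times> UC (b+k) (m-k))"
        by (auto intro!: image_eqI[of _ _ "(take k xs, map (\<lambda>v. v - k) (drop k xs))"])
    qed
    show "(\<lambda>(s,t). jn k s t) ` ((UC b k - PC b k) \<times> UC (b+k) (m-k)) \<subseteq> Dk b m k"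
      using jn_in[OF k True] by auto
  qed
  have inj: "inj_on (\<lambda>(s,t). jn k s t) ((UC b k - PC b k) \<times> UC (b+k) (m-k))"
  proof (rule inj_onI, clarify)
    fix s t s' t' assume a: "s \<in> UC b k" "s \<notin> PC b k" "t \<in> UC (b+k) (m-k)"
      "s' \<in> UC b k" "s' \<notin> PC b k" "t' \<in> UC (b+k) (m-k)" and e: "jn k s t = jn k s' t'"
    have ls: "length s = k" "length s' = k" using a perms_len unfolding UC_def by auto
    have "take k (jn k s t) = take k (jn k s' t')" using e by simp
    hence "s = s'" unfolding jn_def using ls by simp
    moreover have "drop k (jn k s t) = drop k (jn k s' t')" using e by simp
    hence "map (\<lambda>v. v + k) t = map (\<lambda>v. v + k) t'" unfolding jn_def using ls by simp
    hence "t = t'" by (simp add: inj_map_eq_map inj_on_def)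
    ultimately show "s = s' \<and> t = t'" by simp
  qed
  show ?thesis unfolding eq card_image[OF inj] card_cartesian_product using True by simp
next
  case False
  hence "Dk b m k = {}" using Dk_out by blast
  thus ?thesis using False by simp
qed

lemma F2:
  "card (PC b m) = (\<Sum>k\<in>{1..<m}. if even (k - 1 + b) then card (UC b k - PC b k) * card (UC (b+k) (m-k)) else 0)"
proof -
  have U: "PC b m = (\<Union>k\<in>{1..<m}. Dk b m k)"
  proof
    show "PC b m \<subseteq> (\<Union>k\<in>{1..<m}. Dk b m k)"
    proof
      fix xs assume x: "xs \<in> PC b m"
      then obtain k where k: "ssplit xs k" unfolding PC_def sumd_def by blast
      define k0 where "k0 = (LEAST k. ssplit xs k)"
      have k0: "ssplit xs k0" unfolding k0_def by (rule LeastI[of _ k]) (rule k)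
      have mn: "\<forall>k'<k0. \<not> ssplit xs k'" unfolding k0_def using not_less_Least by blast
      have "length xs = m" using x perms_len unfolding PC_def UC_def by auto
      hence "k0 \<in> {1..<m}" using k0 unfolding ssplit_def by auto
      moreover have "xs \<in> Dk b m k0" unfolding Dk_def using x k0 mn by simp
      ultimately show "xs \<in> (\<Union>k\<in>{1..<m}. Dk b m k)" by blast
    qed
  qed (auto simp: Dk_def)
  have disj: "\<forall>i\<in>{1..<m}. \<forall>j\<in>{1..<m}. i \<noteq> j \<longrightarrow> Dk b m i \<inter> Dk b m j = {}"
  proof (intro ballI impI)
    fix i j :: nat assume "i \<noteq> j"
    thus "Dk b m i \<inter> Dk b m j = {}" unfolding Dk_def by (auto simp: neq_iff)
  qed
  have fin: "\<forall>i\<in>{1..<m}. finite (Dk b m i)"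
    using finite_PC unfolding Dk_def by auto
  have "card (PC b m) = (\<Sum>k\<in>{1..<m}. card (Dk b m k))"
    unfolding U by (rule card_UN_disjoint) (use fin disj in auto)
  also have "\<dots> = (\<Sum>k\<in>{1..<m}. if even (k - 1 + b) then card (UC b k - PC b k) * card (UC (b+k) (m-k)) else 0)"
    by (rule sum.cong) (auto simp: Dk_card)
  finally show ?thesis .
qed




definition u :: "nat \<Rightarrow> nat" where "u m = card (UC 0 m)"
definition p0 :: "nat \<Rightarrow> nat" where "p0 m = card (PC 0 m)"
definition p1 :: "nat \<Rightarrow> nat" where "p1 m = card (PC 1 m)"

lemma UC_SS: "UC (Suc (Suc b)) m = UC b m" unfolding UC_def alt_SS ..
lemma PC_SS: "PC (Suc (Suc b)) m = PC b m" unfolding PC_def UC_SS ..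

lemma alt_mod: "alt b = alt (b mod 2)"
  unfolding alt_def by (intro ext) (simp add: even_add)

lemma UC_mod: "UC b m = UC (b mod 2) m" unfolding UC_def by (subst alt_mod) (rule refl)

lemma UC_card: "m \<ge> 1 \<Longrightarrow> card (UC b m) = (if m = 1 then 1 else 0) + p0 m + p1 m"
proof -
  assume m: "m \<ge> 1"
  have "b mod 2 = 0 \<or> b mod 2 = 1" by auto
  thus ?thesis
  proof
    assume b: "b mod 2 = 0"
    have "card (UC b m) = card (UC 0 m)" using UC_mod[of b] b by simp
    also have "\<dots> = (if m = 1 then 1 else 0) + card (PC 0 m) + card (PC 1 m)" using F1[OF m, of 0] F3[of 0 m] by simp
    finally show ?thesis unfolding p0_def p1_def .
  next
    assume b: "b mod 2 = 1"
    have "card (UC b m) = card (UC 1 m)" using UC_mod[of b] b by simp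
    also have "\<dots> = (if m = 1 then 1 else 0) + card (PC 1 m) + card (KC 1 m)" using F1[OF m, of 1] .
    also have "card (KC 1 m) = card (PC 0 m)" using F3[of 1 m] PC_SS[of 0 m] by simp
    finally show ?thesis unfolding p0_def p1_def by linarith
  qed
qed

lemma u_eq: "m \<ge> 1 \<Longrightarrow> u m = (if m = 1 then 1 else 0) + p0 m + p1 m"
  unfolding u_def by (rule UC_card)

lemma diff_card0: "k \<ge> 1 \<Longrightarrow> card (UC 0 k - PC 0 k) = (if k = 1 then 1 else 0) + p1 k"
proof -
  assume k: "k \<ge> 1"
  have "card (UC 0 k - PC 0 k) = card (UC 0 k) - card (PC 0 k)"
    using finite_PC by (intro card_Diff_subset) (auto simp: PC_def)
  moreover have "card (UC 0 k) = (if k = 1 then 1 else 0) + p0 k + p1 k" using UC_card[OF k, of 0] .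
  ultimately show ?thesis unfolding p0_def by linarith
qed

lemma diff_card1: "k \<ge> 1 \<Longrightarrow> card (UC 1 k - PC 1 k) = (if k = 1 then 1 else 0) + p0 k"
proof -
  assume k: "k \<ge> 1"
  have "card (UC 1 k - PC 1 k) = card (UC 1 k) - card (PC 1 k)"
    using finite_PC by (intro card_Diff_subset) (auto simp: PC_def)
  moreover have "card (UC 1 k) = (if k = 1 then 1 else 0) + p0 k + p1 k" using UC_card[OF k, of 1] .
  ultimately show ?thesis unfolding p1_def by linarith
qed

lemma rec0: "p0 m = (\<Sum>k\<in>{1..<m}. if odd k then ((if k = 1 then 1 else 0) + p1 k) * u (m - k) else 0)"
proof -
  have "p0 m = (\<Sum>k\<in>{1..<m}. if even (k - 1 + 0) then card (UC 0 k - PC 0 k) * card (UC (0+k) (m-k)) else 0)"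
    unfolding p0_def by (rule F2)
  also have "\<dots> = (\<Sum>k\<in>{1..<m}. if odd k then ((if k = 1 then 1 else 0) + p1 k) * u (m - k) else 0)"
  proof (rule sum.cong)
    fix k assume "k \<in> {1..<m}"
    hence k: "k \<ge> 1" "m - k \<ge> 1" by auto
    have e: "even (k - 1 + 0) \<longleftrightarrow> odd k" using k by (cases k) auto
    have c2: "card (UC (0+k) (m-k)) = u (m - k)" using UC_card[OF k(2), of k] u_eq[OF k(2)] by simp
    show "(if even (k - 1 + 0) then card (UC 0 k - PC 0 k) * card (UC (0+k) (m-k)) else 0) =
      (if odd k then ((if k = 1 then 1 else 0) + p1 k) * u (m - k) else 0)"
      unfolding e c2 diff_card0[OF k(1)] ..
  qed simp
  finally show ?thesis .
qed

lemma rec1: "p1 m = (\<Sum>k\<in>{1..<m}. if even k then p0 k * u (m - k) else 0)"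
proof -
  have "p1 m = (\<Sum>k\<in>{1..<m}. if even (k - 1 + 1) then card (UC 1 k - PC 1 k) * card (UC (1+k) (m-k)) else 0)"
    unfolding p1_def by (rule F2)
  also have "\<dots> = (\<Sum>k\<in>{1..<m}. if even k then p0 k * u (m - k) else 0)"
  proof (rule sum.cong)
    fix k assume "k \<in> {1..<m}"
    hence k: "k \<ge> 1" "m - k \<ge> 1" by auto
    have e: "even (k - 1 + 1) \<longleftrightarrow> even k" using k by (cases k) auto
    have c2: "card (UC (1+k) (m-k)) = u (m - k)" using UC_card[OF k(2), of "1+k"] u_eq[OF k(2)] by simp
    have c1: "even k \<Longrightarrow> card (UC 1 k - PC 1 k) = p0 k" using diff_card1[OF k(1)] by auto
    show "(if even (k - 1 + 1) then card (UC 1 k - PC 1 k) * card (UC (1+k) (m-k)) else 0) =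
      (if even k then p0 k * u (m - k) else 0)"
      unfolding e c2 using c1 by simp
  qed simp
  finally show ?thesis .
qed




lemma sum_odd: fixes N :: nat and g :: "nat \<Rightarrow> 'a::comm_monoid_add" shows "(\<Sum>k\<in>{1..<N}. if odd k then g k else 0) = (\<Sum>i<N div 2. g (2*i+1))"
proof -
  have "(\<Sum>k\<in>{1..<N}. if odd k then g k else 0) = (\<Sum>k\<in>{k\<in>{1..<N}. odd k}. g k)"
    by (rule sum.inter_filter[symmetric]) simp
  also have "{k\<in>{1..<N}. odd k} = (\<lambda>i. 2*i+1) ` {..<N div 2}"
  proof
    show "{k\<in>{1..<N}. odd k} \<subseteq> (\<lambda>i. 2*i+1) ` {..<N div 2}"
    proof
      fix k assume "k \<in> {k\<in>{1..<N}. odd k}"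
      hence k: "odd k" "k < N" by auto
      hence "k = 2 * (k div 2) + 1" "k div 2 < N div 2" by presburger+
      thus "k \<in> (\<lambda>i. 2*i+1) ` {..<N div 2}" by blast
    qed
    show "(\<lambda>i. 2*i+1) ` {..<N div 2} \<subseteq> {k\<in>{1..<N}. odd k}" by auto
  qed
  also have "(\<Sum>k\<in>(\<lambda>i. 2*i+1) ` {..<N div 2}. g k) = (\<Sum>i<N div 2. g (2*i+1))"
    by (rule sum.reindex_cong[where l="\<lambda>i. 2*i+1"]) (auto simp: inj_on_def)
  finally show ?thesis .
qed

lemma sum_even: fixes N :: nat and g :: "nat \<Rightarrow> 'a::comm_monoid_add" shows "(\<Sum>k\<in>{1..<N}. if even k then g k else 0) = (\<Sum>j\<in>{1..<(N+1) div 2}. g (2*j))"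
proof -
  have "(\<Sum>k\<in>{1..<N}. if even k then g k else 0) = (\<Sum>k\<in>{k\<in>{1..<N}. even k}. g k)"
    by (rule sum.inter_filter[symmetric]) simp
  also have "{k\<in>{1..<N}. even k} = (\<lambda>j. 2*j) ` {1..<(N+1) div 2}"
  proof
    show "{k\<in>{1..<N}. even k} \<subseteq> (\<lambda>j. 2*j) ` {1..<(N+1) div 2}"
    proof
      fix k assume "k \<in> {k\<in>{1..<N}. even k}"
      hence k: "even k" "k < N" "1 \<le> k" by auto
      hence "k = 2 * (k div 2)" "k div 2 < (N+1) div 2" "1 \<le> k div 2" by presburger+
      thus "k \<in> (\<lambda>j. 2*j) ` {1..<(N+1) div 2}" by fastforce
    qed
    show "(\<lambda>j. 2*j) ` {1..<(N+1) div 2} \<subseteq> {k\<in>{1..<N}. even k}" by auto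
  qed
  also have "(\<Sum>k\<in>(\<lambda>j. 2*j) ` {1..<(N+1) div 2}. g k) = (\<Sum>j\<in>{1..<(N+1) div 2}. g (2*j))"
    by (rule sum.reindex_cong[where l="\<lambda>j. 2*j"]) (auto simp: inj_on_def)
  finally show ?thesis .
qed

definition q :: "nat \<Rightarrow> nat" where "q i = (if i = 0 then 1 else 0) + p1 (2*i+1)"

lemma C1: "p0 (2*n+1) = (\<Sum>i<n. q i * u (2*(n-i)))"
proof -
  have "p0 (2*n+1) = (\<Sum>i<(2*n+1) div 2. ((if 2*i+1 = 1 then 1 else 0) + p1 (2*i+1)) * u (2*n+1 - (2*i+1)))"
    unfolding rec0[of "2*n+1"] sum_odd ..
  also have "\<dots> = (\<Sum>i<n. q i * u (2*(n-i)))"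
    by (rule sum.cong) (auto simp: q_def right_diff_distrib')
  finally show ?thesis .
qed

lemma C2: "p0 (2*n) = (\<Sum>i<n. q i * u (2*(n-1-i)+1))"
proof -
  have "p0 (2*n) = (\<Sum>i<(2*n) div 2. ((if 2*i+1 = 1 then 1 else 0) + p1 (2*i+1)) * u (2*n - (2*i+1)))"
    unfolding rec0[of "2*n"] sum_odd ..
  also have "\<dots> = (\<Sum>i<n. q i * u (2*(n-1-i)+1))"
  proof (rule sum.cong)
    fix i assume "i \<in> {..<n}"
    hence "2*n - (2*i+1) = 2*(n-1-i)+1" by auto
    thus "((if 2*i+1 = 1 then 1 else 0) + p1 (2*i+1)) * u (2*n - (2*i+1)) = q i * u (2*(n-1-i)+1)"
      by (simp add: q_def)
  qed simp
  finally show ?thesis .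
qed

lemma C3: "p1 (2*n+1) = (\<Sum>j\<in>{1..<n+1}. p0 (2*j) * u (2*(n-j)+1))"
proof -
  have "p1 (2*n+1) = (\<Sum>j\<in>{1..<(2*n+1+1) div 2}. p0 (2*j) * u (2*n+1 - 2*j))"
    unfolding rec1[of "2*n+1"] sum_even ..
  also have "\<dots> = (\<Sum>j\<in>{1..<n+1}. p0 (2*j) * u (2*(n-j)+1))"
  proof (rule sum.cong)
    fix j assume "j \<in> {1..<n+1}"
    hence "2*n+1 - 2*j = 2*(n-j)+1" by auto
    thus "p0 (2*j) * u (2*n+1 - 2*j) = p0 (2*j) * u (2*(n-j)+1)" by simp
  qed simp
  finally show ?thesis .
qed

lemma C4: "p1 (2*n) = (\<Sum>j\<in>{1..<n}. p0 (2*j) * u (2*(n-j)))"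
proof -
  have "p1 (2*n) = (\<Sum>j\<in>{1..<(2*n+1) div 2}. p0 (2*j) * u (2*n - 2*j))"
    unfolding rec1[of "2*n"] sum_even ..
  also have "\<dots> = (\<Sum>j\<in>{1..<n}. p0 (2*j) * u (2*(n-j)))"
  proof (rule sum.cong)
    fix j assume "j \<in> {1..<n}"
    hence "2*n - 2*j = 2*(n-j)" by auto
    thus "p0 (2*j) * u (2*n - 2*j) = p0 (2*j) * u (2*(n-j))" by simp
  qed simp
  finally show ?thesis .
qed

lemma p0_0: "p0 0 = 0" using rec0[of 0] by simp
lemma p1_0: "p1 0 = 0" using rec1[of 0] by simp

definition sA :: "'a::comm_ring_1 fps" where "sA = Abs_fps (\<lambda>n. of_nat (u (2*n+1)))"
definition sB :: "'a::comm_ring_1 fps" where "sB = Abs_fps (\<lambda>n. if n = 0 then 0 else of_nat (u (2*n)))"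
definition sPo :: "'a::comm_ring_1 fps" where "sPo = Abs_fps (\<lambda>n. of_nat (p0 (2*n+1)))"
definition sPe :: "'a::comm_ring_1 fps" where "sPe = Abs_fps (\<lambda>n. of_nat (p0 (2*n)))"
definition sMo :: "'a::comm_ring_1 fps" where "sMo = Abs_fps (\<lambda>n. of_nat (p1 (2*n+1)))"
definition sMe :: "'a::comm_ring_1 fps" where "sMe = Abs_fps (\<lambda>n. of_nat (p1 (2*n)))"

lemma sum0n: fixes n :: nat shows "(\<Sum>i=0..n. f i) = (\<Sum>i<n. f i) + (f n :: 'a::comm_monoid_add)"
  by (induct n) (auto simp: atLeast0AtMost)

lemma one_Mo: "fps_nth (1 + sMo) i = (of_nat (q i) :: 'a::comm_ring_1)"
  unfolding sMo_def q_def by simp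

lemma E1: "(sA :: 'a::comm_ring_1 fps) = 1 + sPo + sMo"
proof (rule fps_ext)
  fix n
  have "u (2*n+1) = (if 2*n+1 = 1 then 1 else 0) + p0 (2*n+1) + p1 (2*n+1)" by (rule u_eq) simp
  thus "fps_nth (sA :: 'a fps) n = fps_nth (1 + sPo + sMo) n"
    unfolding sA_def sPo_def sMo_def by simp
qed

lemma E2: "(sB :: 'a::comm_ring_1 fps) = sPe + sMe"
proof (rule fps_ext)
  fix n
  show "fps_nth (sB :: 'a fps) n = fps_nth (sPe + sMe) n"
  proof (cases "n = 0")
    case True thus ?thesis unfolding sB_def sPe_def sMe_def by (simp add: p0_0 p1_0)
  next
    case False
    have "u (2*n) = (if 2*n = 1 then 1 else 0) + p0 (2*n) + p1 (2*n)" by (rule u_eq) (use False in simp)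
    thus ?thesis using False unfolding sB_def sPe_def sMe_def by simp
  qed
qed

lemma E3: "(sPo :: 'a::comm_ring_1 fps) = (1 + sMo) * sB"
proof (rule fps_ext)
  fix n
  have "fps_nth ((1 + sMo) * sB :: 'a fps) n = (\<Sum>i=0..n. of_nat (q i) * (if n - i = 0 then 0 else of_nat (u (2*(n-i)))))"
    unfolding fps_mult_nth one_Mo by (simp add: sB_def)
  also have "\<dots> = (\<Sum>i<n. of_nat (q i) * of_nat (u (2*(n-i))))"
    unfolding sum0n by (auto intro!: sum.cong)
  also have "\<dots> = of_nat (p0 (2*n+1))" unfolding C1 by simp
  finally show "fps_nth (sPo :: 'a fps) n = fps_nth ((1 + sMo) * sB) n" unfolding sPo_def by simp
qed

lemma E4: "(sPe :: 'a::comm_ring_1 fps) = fps_X * (1 + sMo) * sA"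
proof (rule fps_ext)
  fix n
  show "fps_nth (sPe :: 'a fps) n = fps_nth (fps_X * (1 + sMo) * sA) n"
  proof (cases n)
    case 0 thus ?thesis unfolding sPe_def by (simp add: p0_0)
  next
    case (Suc m)
    have "fps_nth (fps_X * (1 + sMo) * sA :: 'a fps) n = fps_nth ((1 + sMo) * sA :: 'a fps) m"
      unfolding mult.assoc fps_X_mult_nth using Suc by simp
    also have "\<dots> = (\<Sum>i=0..m. of_nat (q i) * of_nat (u (2*(m-i)+1)))"
      unfolding fps_mult_nth one_Mo by (simp add: sA_def)
    also have "\<dots> = of_nat (p0 (2*n))" unfolding C2 Suc
      by (simp add: atLeast0AtMost lessThan_Suc_atMost)
    finally show ?thesis unfolding sPe_def by simp
  qed
qed

lemma E5: "(sMo :: 'a::comm_ring_1 fps) = sPe * sA"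
proof (rule fps_ext)
  fix n
  have "fps_nth (sPe * sA :: 'a fps) n = (\<Sum>j=0..n. of_nat (p0 (2*j)) * of_nat (u (2*(n-j)+1)))"
    unfolding fps_mult_nth by (simp add: sA_def sPe_def)
  also have "\<dots> = (\<Sum>j\<in>{1..<n+1}. of_nat (p0 (2*j)) * of_nat (u (2*(n-j)+1)))"
  proof (rule sum.mono_neutral_cong_right)
    show "\<forall>i\<in>{0..n} - {1..<n+1}. (of_nat (p0 (2*i)) * of_nat (u (2*(n-i)+1)) :: 'a) = 0"
    proof
      fix i assume "i \<in> {0..n} - {1..<n+1}" hence "i = 0" by auto
      thus "(of_nat (p0 (2*i)) * of_nat (u (2*(n-i)+1)) :: 'a) = 0" by (simp add: p0_0)
    qed
  qed auto
  also have "\<dots> = of_nat (p1 (2*n+1))" unfolding C3 by simp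
  finally show "fps_nth (sMo :: 'a fps) n = fps_nth (sPe * sA) n" unfolding sMo_def by simp
qed

lemma E6: "(sMe :: 'a::comm_ring_1 fps) = sPe * sB"
proof (rule fps_ext)
  fix n
  have "fps_nth (sPe * sB :: 'a fps) n = (\<Sum>j=0..n. of_nat (p0 (2*j)) * (if n - j = 0 then 0 else of_nat (u (2*(n-j)))))"
    unfolding fps_mult_nth by (simp add: sB_def sPe_def)
  also have "\<dots> = (\<Sum>j\<in>{1..<n}. of_nat (p0 (2*j)) * of_nat (u (2*(n-j))))"
  proof (rule sum.mono_neutral_cong_right)
    show "\<forall>i\<in>{0..n} - {1..<n}. (of_nat (p0 (2*i)) * (if n - i = 0 then 0 else of_nat (u (2*(n-i)))) :: 'a) = 0"
    proof
      fix i assume "i \<in> {0..n} - {1..<n}" hence "i = 0 \<or> i = n" by auto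
      thus "(of_nat (p0 (2*i)) * (if n - i = 0 then 0 else of_nat (u (2*(n-i)))) :: 'a) = 0" by (auto simp add: p0_0)
    qed
  qed auto
  also have "\<dots> = of_nat (p1 (2*n))" unfolding C4 by simp
  finally show "fps_nth (sMe :: 'a fps) n = fps_nth (sPe * sB) n" unfolding sMe_def by simp
qed



lemma alg:
  fixes A B Po Pe Mo Me X :: "'a::comm_ring_1 fps"
  assumes e1: "A = 1 + Po + Mo" and e2: "B = Pe + Me" and e3: "Po = (1 + Mo) * B"
    and e4: "Pe = X * (1 + Mo) * A" and e5: "Mo = Pe * A" and e6: "Me = Pe * B"
  shows "A = 1 + X * A^2 + X * A^3"
proof -
  define Q where "Q = 1 + Mo"
  have h1: "A = Q * (1 + B)" using e1 e3 unfolding Q_def by (simp add: algebra_simps)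
  have hB: "B - Pe - Pe * B = 0"
  proof -
    have "B - Pe - Pe * B = B - Pe - Me" using e6 by simp
    also have "\<dots> = 0" using e2 by simp
    finally show ?thesis .
  qed
  have h2: "A * (1 - Pe) = Q"
  proof -
    have "A * (1 - Pe) = Q * (1 + (B - Pe - Pe * B))" unfolding h1 by (simp add: algebra_simps)
    thus ?thesis unfolding hB by simp
  qed
  have h3: "Q - 1 = Pe * A" unfolding Q_def using e5 by simp
  have h4: "A + 1 = 2 * Q"
  proof -
    have "A - A * Pe = Q" using h2 by (simp add: algebra_simps)
    hence "A - (Q - 1) = Q" unfolding h3 by (simp add: algebra_simps)
    thus ?thesis by (simp add: algebra_simps mult_2)
  qed
  have h5: "A - X * Q * A^2 = Q"
  proof -
    have "A - A * Pe = Q" using h2 by (simp add: algebra_simps)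
    moreover have "A * Pe = X * Q * A^2" unfolding e4 Q_def by (simp add: algebra_simps power2_eq_square)
    ultimately show ?thesis by simp
  qed
  have "2 * A = (2 * Q) * (1 + X * A^2)"
  proof -
    have "2 * A = 2 * (A - X * Q * A^2) + 2 * X * Q * A^2" by (simp add: algebra_simps)
    thus ?thesis unfolding h5 by (simp add: algebra_simps)
  qed
  hence "2 * A = (A + 1) * (1 + X * A^2)" unfolding h4[symmetric] .
  hence "A + A = A + (1 + X * A^2 + X * A^3)" by (simp add: algebra_simps power2_eq_square power3_eq_cube mult_2)
  thus ?thesis by (simp add: add.assoc)
qed



definition psi :: "real fps \<Rightarrow> real fps" where
  "psi Y = (1 + Y)^2 + (1 + Y)^3"

lemma psi_diff: "psi A - psi B = (A - B) * ((2 + A + B) + ((1+A)^2 + (1+A)*(1+B) + (1+B)^2))"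
  unfolding psi_def by (simp add: algebra_simps power2_eq_square power3_eq_cube)

lemma uniq:
  assumes G0: "fps_nth G 0 = 0" and e1: "Y1 = G * psi Y1" and e2: "Y2 = G * psi Y2"
  shows "Y1 = Y2"
proof -
  define H where "H = (2 + Y1 + Y2) + ((1+Y1)^2 + (1+Y1)*(1+Y2) + (1+Y2)^2)"
  have "Y1 - Y2 = G * (psi Y1 - psi Y2)" using e1 e2 by (metis right_diff_distrib)
  also have "\<dots> = G * ((Y1 - Y2) * H)" unfolding H_def psi_diff ..
  finally have "(Y1 - Y2) * (1 - G * H) = 0" by (simp add: algebra_simps)
  moreover have "1 - G * H \<noteq> 0"
  proof
    assume "1 - G * H = 0"
    hence "fps_nth (1 - G * H) 0 = 0" by simp
    thus False using G0 by simp
  qed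
  ultimately show ?thesis by simp
qed

lemma compose_psi:
  assumes "fps_nth G 0 = 0"
  shows "psi F oo G = psi (F oo G)"
  unfolding psi_def using assms
  by (simp add: fps_compose_add_distrib fps_compose_power[symmetric] fps_compose_1)

lemma lemL:
  fixes j :: nat
  defines "ps \<equiv> psi fps_X"
  shows "fps_nth (fps_deriv (fps_X * inverse ps) * ps^(j+1)) j = (if j = 0 then 1 else 0)"
proof -
  have p0: "fps_nth ps 0 \<noteq> 0" unfolding ps_def psi_def by (simp add: fps_nth_power_0)
  define V where "V = inverse ps"
  have pV: "ps * V = 1" unfolding V_def using p0 by (rule inverse_mult_eq_1')
  have dV: "fps_deriv V = - fps_deriv ps * V^2" unfolding V_def using p0 by (rule fps_inverse_deriv)
  have D: "fps_deriv (fps_X * V) = V + fps_X * fps_deriv V" by (simp add: algebra_simps)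
  show ?thesis
  proof (cases j)
    case 0
    have "fps_deriv (fps_X * V) * ps = ps * V + fps_X * (fps_deriv V * ps)" unfolding D by (simp add: algebra_simps)
    hence "fps_nth (fps_deriv (fps_X * V) * ps) 0 = 1" using pV by simp
    thus ?thesis using 0 V_def by simp
  next
    case (Suc i)
    have "fps_deriv (fps_X * V) * ps^(j+1) = (ps * V) * ps^j - fps_X * (fps_deriv ps * ps^i) * (ps * V)^2"
      unfolding D dV Suc by (simp add: algebra_simps power2_eq_square)
    also have "\<dots> = ps^j - fps_X * (fps_deriv ps * ps^i)" using pV by simp
    finally have e: "fps_deriv (fps_X * V) * ps^(j+1) = ps^j - fps_X * (fps_deriv ps * ps^i)" .
    have "fps_deriv (ps^j) = of_nat j * (fps_deriv ps * ps^i)" unfolding fps_deriv_power' Suc diff_Suc_1 mult.assoc ..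
    hence "fps_nth (fps_deriv (ps^j)) i = of_nat j * fps_nth (fps_deriv ps * ps^i) i" by simp
    hence "of_nat (i+1) * fps_nth (ps^j) (i+1) = of_nat j * fps_nth (fps_deriv ps * ps^i) i" by simp
    hence "fps_nth (ps^j) j = fps_nth (fps_deriv ps * ps^i) i" using Suc by simp
    thus ?thesis unfolding V_def[symmetric] e using Suc by (simp add: fps_X_mult_nth)
  qed
qed

lemma lagrange:
  fixes F :: "real fps" and n :: nat
  assumes eq: "F = fps_X * psi F" and n: "n \<ge> 1"
  shows "of_nat n * fps_nth F n = fps_nth (psi fps_X ^ n) (n - 1)"
proof -
  define ps where "ps = psi fps_X"
  have p0: "fps_nth ps 0 \<noteq> 0" unfolding ps_def psi_def by (simp add: fps_nth_power_0)
  define V where "V = inverse ps"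
  have pV: "ps * V = 1" unfolding V_def using p0 by (rule inverse_mult_eq_1')
  define G where "G = fps_X * V"
  have G0: "fps_nth G 0 = 0" unfolding G_def by simp
  have XG: "fps_X = G * psi fps_X" unfolding G_def ps_def[symmetric] using pV
    by (simp add: algebra_simps)
  have "F oo G = (fps_X * psi F) oo G" using eq by simp
  also have "\<dots> = G * psi (F oo G)"
    using G0 by (simp add: fps_compose_mult_distrib fps_X_fps_compose_startby0 compose_psi)
  finally have FG: "F oo G = fps_X" using uniq[OF G0 _ XG] by simp
  define P where "P = (\<Sum>m\<le>n. fps_const (fps_nth F m) * fps_X ^ m)"
  define E where "E = Abs_fps (\<lambda>i. fps_nth F (i + (n+1)))"
  have FPE: "F = P + fps_X^(n+1) * E"
  proof (rule fps_ext)
    fix i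
    have "fps_nth P i = (if i \<le> n then fps_nth F i else 0)"
      unfolding P_def fps_sum_nth by (simp add: if_distrib sum.delta cong: if_cong)
    show "fps_nth F i = fps_nth (P + fps_X ^ (n + 1) * E) i"
      unfolding fps_add_nth fps_X_power_mult_nth \<open>fps_nth P i = _\<close> by (simp add: E_def)
  qed
  define K where "K = E oo G"
  have PG: "P oo G = (\<Sum>m\<le>n. fps_const (fps_nth F m) * G ^ m)"
    unfolding P_def fps_compose_sum_distrib using G0
    by (simp add: fps_compose_mult_distrib fps_X_power_compose fps_const_compose)
  have "fps_X = (\<Sum>m\<le>n. fps_const (fps_nth F m) * G ^ m) + G^(n+1) * K"
    using FG FPE G0 unfolding K_def
    by (simp add: fps_compose_add_distrib fps_compose_mult_distrib fps_X_power_compose PG)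
  hence "fps_deriv fps_X = fps_deriv ((\<Sum>m\<le>n. fps_const (fps_nth F m) * G ^ m) + G^(n+1) * K)" by simp
  then have one: "(\<Sum>m\<le>n. fps_const (fps_nth F m) * (of_nat m * fps_deriv G * G^(m-1)))
           + (of_nat (n+1) * fps_deriv G * G^n * K + G^(n+1) * fps_deriv K) = 1"
  proof -
    have d1: "fps_deriv (G^(n+1) * K) = of_nat (n+1) * fps_deriv G * G^n * K + G^(n+1) * fps_deriv K"
      unfolding fps_deriv_mult fps_deriv_power' by (simp add: algebra_simps)
    have d2: "fps_deriv (\<Sum>m\<le>n. fps_const (fps_nth F m) * G ^ m)
       = (\<Sum>m\<le>n. fps_const (fps_nth F m) * (of_nat m * fps_deriv G * G^(m-1)))"
      unfolding fps_deriv_sum by (rule sum.cong) (simp_all add: fps_deriv_power')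
    assume "fps_deriv fps_X = fps_deriv ((\<Sum>m\<le>n. fps_const (fps_nth F m) * G ^ m) + G^(n+1) * K)"
    thus ?thesis unfolding fps_deriv_add d1 d2 by simp
  qed
  have GP: "G^n * ps^n = fps_X ^ n" unfolding G_def power_mult_distrib using pV
    by (simp add: mult.assoc power_mult_distrib[symmetric] mult.commute[of V])
  have "ps^n = ps^n * ((\<Sum>m\<le>n. fps_const (fps_nth F m) * (of_nat m * fps_deriv G * G^(m-1)))
           + (of_nat (n+1) * fps_deriv G * G^n * K + G^(n+1) * fps_deriv K))" by (simp only: one mult_1_right)
  also have "\<dots> = (\<Sum>m\<le>n. fps_const (fps_nth F m) * (of_nat m * (fps_deriv G * (G^(m-1) * ps^n))))
           + (G^n * ps^n) * (of_nat (n+1) * fps_deriv G * K + G * fps_deriv K)"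
    unfolding distrib_left sum_distrib_left
    by (intro arg_cong2[where f="(+)"] sum.cong refl) (simp_all only: mult_ac power_add power_one_right)
  finally have main: "ps^n = (\<Sum>m\<le>n. fps_const (fps_nth F m) * (of_nat m * (fps_deriv G * (G^(m-1) * ps^n))))
           + fps_X^n * (of_nat (n+1) * fps_deriv G * K + G * fps_deriv K)" unfolding GP .
  have hterm: "fps_nth (fps_deriv G * (G^(m-1) * ps^n)) (n-1) = (if m = n then 1 else 0)"
    if m: "1 \<le> m" "m \<le> n" for m
  proof -
    have "G^(m-1) * ps^n = fps_X^(m-1) * ps^(n-m+1)"
    proof -
      have "ps^n = ps^(m-1) * ps^(n-m+1)" unfolding power_add[symmetric] using m by (simp only: ac_simps) simp
      hence "G^(m-1) * ps^n = fps_X^(m-1) * ((V * ps)^(m-1)) * ps^(n-m+1)"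
        unfolding G_def by (simp add: power_mult_distrib algebra_simps)
      thus ?thesis using pV by (simp add: mult.commute)
    qed
    hence "fps_nth (fps_deriv G * (G^(m-1) * ps^n)) (n-1)
        = fps_nth (fps_X^(m-1) * (fps_deriv G * ps^((n-m)+1))) (n-1)"
      using m by (simp add: algebra_simps)
    also have "\<dots> = fps_nth (fps_deriv G * ps^((n-m)+1)) (n-m)"
      using m by (simp add: fps_X_power_mult_nth)
    also have "\<dots> = (if n - m = 0 then 1 else 0)"
      unfolding G_def V_def ps_def by (rule lemL)
    finally show ?thesis using m by auto
  qed
  have "fps_nth (ps^n) (n-1) = (\<Sum>m\<le>n. fps_nth F m * of_nat m * fps_nth (fps_deriv G * (G^(m-1) * ps^n)) (n-1))"
    using n by (subst main) (simp add: fps_sum_nth fps_X_power_mult_nth mult.assoc)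
  also have "\<dots> = (\<Sum>m\<le>n. if m = n then fps_nth F m * of_nat m else 0)"
  proof (rule sum.cong)
    fix m assume "m \<in> {..n}"
    thus "fps_nth F m * of_nat m * fps_nth (fps_deriv G * (G^(m-1) * ps^n)) (n-1) = (if m = n then fps_nth F m * of_nat m else 0)"
    proof (cases "m = 0")
      case False
      hence "fps_nth (fps_deriv G * (G^(m-1) * ps^n)) (n-1) = (if m = n then 1 else 0)"
        using hterm[of m] \<open>m \<in> {..n}\<close> by simp
      thus ?thesis by simp
    qed simp
  qed simp
  also have "\<dots> = fps_nth F n * of_nat n" by simp
  finally show ?thesis unfolding ps_def by simp
qed

lemma coef_binom: "fps_nth ((fps_const c + fps_X) ^ k :: real fps) i = of_nat (k choose i) * c ^ (k - i)"
proof -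
  have "(fps_const c + fps_X) ^ k = (fps_X + fps_const c) ^ k" by (simp add: add.commute)
  also have "\<dots> = (\<Sum>j\<le>k. of_nat (k choose j) * fps_X ^ j * fps_const c ^ (k - j))"
    by (rule binomial_ring)
  finally have e: "(fps_const c + fps_X) ^ k = (\<Sum>j\<le>k. fps_const (of_nat (k choose j) * c ^ (k - j)) * fps_X ^ j)"
    by (simp add: fps_const_power fps_of_nat[symmetric] fps_const_mult[symmetric] algebra_simps del: fps_const_mult)
  show ?thesis unfolding e fps_sum_nth
    by (simp add: if_distrib sum.delta cong: if_cong)
qed

lemma coef_psi:
  assumes n: "n \<ge> 1"
  shows "fps_nth (psi fps_X ^ n) (n - 1) = 2 * (\<Sum>i = 0..n - 1. 2 ^ i * real ((2 * n) choose i) * real (n choose (i + 1)))"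
proof -
  have "psi fps_X = (fps_const 1 + fps_X)^2 * (fps_const 2 + fps_X)"
    unfolding psi_def by (simp add: power2_eq_square power3_eq_cube algebra_simps numeral_fps_const)
  hence e: "psi fps_X ^ n = (fps_const 1 + fps_X)^(2*n) * (fps_const 2 + fps_X)^n"
    by (simp add: power_mult_distrib power_mult)
  have "fps_nth (psi fps_X ^ n) (n - 1) = (\<Sum>i = 0..n - 1. real ((2*n) choose i) * (real (n choose (n - 1 - i)) * 2 ^ (n - (n - 1 - i))))"
    unfolding e fps_mult_nth coef_binom by simp
  also have "\<dots> = (\<Sum>i = 0..n - 1. 2 * (2 ^ i * real ((2 * n) choose i) * real (n choose (i + 1))))"
  proof (rule sum.cong)
    fix i assume "i \<in> {0..n-1}"
    hence i: "i + 1 \<le> n" using n by auto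
    have "n choose (n - 1 - i) = n choose (i + 1)"
      using binomial_symmetric[OF i] i by (metis diff_diff_left add.commute)
    moreover have "n - (n - 1 - i) = Suc i" using i by auto
    ultimately show "real ((2*n) choose i) * (real (n choose (n - 1 - i)) * 2 ^ (n - (n - 1 - i))) = 2 * (2 ^ i * real ((2 * n) choose i) * real (n choose (i + 1)))"
      by simp
  qed simp
  finally show ?thesis by (simp add: sum_distrib_left)
qed




definition Phi :: "nat \<Rightarrow> (nat \<Rightarrow> nat) \<Rightarrow> nat list" where
  "Phi m p = map (\<lambda>i. p (Suc i) - 1) [0..<m]"

lemma Phi_len: "length (Phi m p) = m" unfolding Phi_def by simp
lemma Phi_nth: "i < m \<Longrightarrow> Phi m p ! i = p (Suc i) - 1" unfolding Phi_def by simp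


lemma four_cases: "(a::nat) < 4 \<Longrightarrow> a = 0 \<or> a = 1 \<or> a = 2 \<or> a = 3" by auto

context
  fixes m :: nat and p :: "nat \<Rightarrow> nat" assumes pp: "p permutes {1..m}"
begin

lemma pv: "1 \<le> x \<Longrightarrow> x \<le> m \<Longrightarrow> 1 \<le> p x \<and> p x \<le> m"
  using permutes_in_image[OF pp, of x] by auto

lemma Phi_lt: "i < m \<Longrightarrow> j < m \<Longrightarrow> (Phi m p ! i < Phi m p ! j) \<longleftrightarrow> p (Suc i) < p (Suc j)"
  using pv[of "Suc i"] pv[of "Suc j"] by (auto simp: Phi_nth)

lemma p_inj: "p x = p y \<Longrightarrow> x = y" using permutes_inj[OF pp] by (auto simp: inj_def)

lemma Phi_perms: "Phi m p \<in> perms m"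
  unfolding perms_def
proof (intro CollectI conjI)
  show "distinct (Phi m p)"
    unfolding distinct_conv_nth Phi_len
  proof (intro allI impI)
    fix i j assume "i < m" "j < m" "i \<noteq> j"
    moreover have "p (Suc i) \<noteq> p (Suc j)" using p_inj[of "Suc i" "Suc j"] \<open>i \<noteq> j\<close> by auto
    moreover have "1 \<le> p (Suc i)" "1 \<le> p (Suc j)" using pv[of "Suc i"] pv[of "Suc j"] \<open>i < m\<close> \<open>j < m\<close> by auto
    ultimately show "Phi m p ! i \<noteq> Phi m p ! j" by (simp add: Phi_nth)
  qed
  show "set (Phi m p) = {0..<m}"
  proof
    show "set (Phi m p) \<subseteq> {0..<m}"
    proof
      fix v assume "v \<in> set (Phi m p)"
      then obtain i where i: "i < m" "v = Phi m p ! i" by (auto simp: in_set_conv_nth Phi_len)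
      thus "v \<in> {0..<m}" using pv[of "Suc i"] by (simp add: Phi_nth) linarith
    qed
    show "{0..<m} \<subseteq> set (Phi m p)"
    proof
      fix v assume v: "v \<in> {0..<m}"
      hence "Suc v \<in> p ` {1..m}" using permutes_image[OF pp] by auto
      then obtain x where x: "x \<in> {1..m}" "p x = Suc v" by auto
      hence "Phi m p ! (x - 1) = v" using Phi_nth[of "x-1"] by auto
      moreover have "x - 1 < length (Phi m p)" using x Phi_len by auto
      ultimately show "v \<in> set (Phi m p)" by (metis nth_mem)
    qed
  qed
qed

lemma Phi_alt: "alternating m p \<longleftrightarrow> alt 0 (Phi m p)"
proof -
  have "alternating m p \<longleftrightarrow> (\<forall>i. Suc i < m \<longrightarrow> (if odd (Suc i) then p (Suc i) < p (Suc (Suc i)) else p (Suc (Suc i)) < p (Suc i)))"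
    unfolding alternating_def
  proof (intro iffI allI impI)
    fix i assume "\<forall>i. 1 \<le> i \<and> i < m \<longrightarrow> (if odd i then p i < p (Suc i) else p (Suc i) < p i)" "Suc i < m"
    thus "if odd (Suc i) then p (Suc i) < p (Suc (Suc i)) else p (Suc (Suc i)) < p (Suc i)" by auto
  next
    fix i assume a: "\<forall>i. Suc i < m \<longrightarrow> (if odd (Suc i) then p (Suc i) < p (Suc (Suc i)) else p (Suc (Suc i)) < p (Suc i))"
      and i: "1 \<le> i \<and> i < m"
    then obtain j where "i = Suc j" by (cases i) auto
    thus "if odd i then p i < p (Suc i) else p (Suc i) < p i" using a i by auto
  qed
  also have "\<dots> \<longleftrightarrow> alt 0 (Phi m p)"
    unfolding alt_def Phi_len
  proof (intro all_cong imp_cong refl)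
    fix i assume i: "Suc i < m"
    have ne: "p (Suc i) \<noteq> p (Suc (Suc i))" using p_inj[of "Suc i" "Suc (Suc i)"] by auto
    show "(if odd (Suc i) then p (Suc i) < p (Suc (Suc i)) else p (Suc (Suc i)) < p (Suc i)) \<longleftrightarrow>
          (Phi m p ! i < Phi m p ! Suc i \<longleftrightarrow> even (i + 0))"
      using Phi_lt[of i "Suc i"] i ne by auto
  qed
  finally show ?thesis .
qed


lemma pat_iff:
  assumes tau: "length tau = 4" "distinct tau"
  shows "contains_pattern m p tau \<longleftrightarrow>
    (\<exists>i j k l. i < j \<and> j < k \<and> k < l \<and> l < m \<and>
      (\<forall>a<4. \<forall>b<4. Phi m p ! ([i,j,k,l]!a) < Phi m p ! ([i,j,k,l]!b) \<longleftrightarrow> tau!a < tau!b))"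
proof
  assume "contains_pattern m p tau"
  then obtain f where f: "strict_mono_on {..<4} f" "f ` {..<4} \<subseteq> {1..m}"
    "\<forall>a<4. \<forall>b<4. p (f a) < p (f b) \<longleftrightarrow> tau ! a < tau ! b"
    unfolding contains_pattern_def tau by blast
  have fr: "a < 4 \<Longrightarrow> 1 \<le> f a \<and> f a \<le> m" for a using f(2) by auto
  have fm: "a < b \<Longrightarrow> b < 4 \<Longrightarrow> f a < f b" for a b using f(1) unfolding strict_mono_on_def by auto
  define i j k l where "i = f 0 - 1" "j = f 1 - 1" "k = f 2 - 1" "l = f 3 - 1"
  have ijkl: "[i,j,k,l] ! a = f a - 1" if "a < 4" for a using four_cases[OF that] unfolding i_j_k_l_def by auto
  show "\<exists>i j k l. i < j \<and> j < k \<and> k < l \<and> l < m \<and>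
      (\<forall>a<4. \<forall>b<4. Phi m p ! ([i,j,k,l]!a) < Phi m p ! ([i,j,k,l]!b) \<longleftrightarrow> tau!a < tau!b)"
  proof (intro exI conjI allI impI)
    show "i < j" "j < k" "k < l" "l < m" unfolding i_j_k_l_def using fm[of 0 1] fm[of 1 2] fm[of 2 3] fr[of 0] fr[of 1] fr[of 2] fr[of 3] by auto
    fix a b :: nat assume ab: "a < 4" "b < 4"
    have "Phi m p ! ([i,j,k,l]!a) < Phi m p ! ([i,j,k,l]!b) \<longleftrightarrow> p (Suc (f a - 1)) < p (Suc (f b - 1))"
      unfolding ijkl[OF ab(1)] ijkl[OF ab(2)] using fr[OF ab(1)] fr[OF ab(2)] by (intro Phi_lt) auto
    also have "\<dots> \<longleftrightarrow> p (f a) < p (f b)" using fr[OF ab(1)] fr[OF ab(2)] by simp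
    finally show "Phi m p ! ([i,j,k,l]!a) < Phi m p ! ([i,j,k,l]!b) \<longleftrightarrow> tau!a < tau!b" using f(3) ab by simp
  qed
next
  assume "\<exists>i j k l. i < j \<and> j < k \<and> k < l \<and> l < m \<and>
      (\<forall>a<4. \<forall>b<4. Phi m p ! ([i,j,k,l]!a) < Phi m p ! ([i,j,k,l]!b) \<longleftrightarrow> tau!a < tau!b)"
  then obtain i j k l where h: "i < j" "j < k" "k < l" "l < m"
    "\<forall>a<4. \<forall>b<4. Phi m p ! ([i,j,k,l]!a) < Phi m p ! ([i,j,k,l]!b) \<longleftrightarrow> tau!a < tau!b" by blast
  define f where "f a = Suc ([i,j,k,l] ! a)" for a
  have fl: "a < 4 \<Longrightarrow> [i,j,k,l] ! a < m" for a using four_cases[of a] h by auto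
  show "contains_pattern m p tau" unfolding contains_pattern_def tau
  proof (intro exI conjI allI impI)
    show "strict_mono_on {..<4} f" unfolding strict_mono_on_def f_def
    proof (intro allI impI)
      fix a b :: nat assume "a \<in> {..<4} \<and> b \<in> {..<4} \<and> a < b"
      thus "Suc ([i,j,k,l] ! a) < Suc ([i,j,k,l] ! b)" using four_cases[of a] four_cases[of b] h by auto
    qed
    show "f ` {..<4} \<subseteq> {1..m}" unfolding f_def using fl by (auto simp: Suc_le_eq)
    fix a b :: nat assume ab: "a < 4" "b < 4"
    have "p (f a) < p (f b) \<longleftrightarrow> Phi m p ! ([i,j,k,l]!a) < Phi m p ! ([i,j,k,l]!b)"
      unfolding f_def using Phi_lt[OF fl[OF ab(1)] fl[OF ab(2)]] by simp
    thus "p (f a) < p (f b) \<longleftrightarrow> tau!a < tau!b" using h(5) ab by simp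
  qed
qed

end

lemma chain2413: "(\<forall>aa<4. \<forall>bb<4. (gg aa :: nat) < gg bb \<longleftrightarrow> ([2,4,1,3]::nat list)!aa < [2,4,1,3]!bb) \<longleftrightarrow> (gg 2 < gg 0 \<and> gg 0 < gg 3 \<and> gg 3 < gg 1)"
proof
  assume h: "\<forall>aa<4. \<forall>bb<4. gg aa < gg bb \<longleftrightarrow> ([2,4,1,3]::nat list)!aa < [2,4,1,3]!bb"
  show "gg 2 < gg 0 \<and> gg 0 < gg 3 \<and> gg 3 < gg 1" using h[rule_format, of 2 0] h[rule_format, of 0 3] h[rule_format, of 3 1] by simp
next
  assume h: "gg 2 < gg 0 \<and> gg 0 < gg 3 \<and> gg 3 < gg 1"
  show "\<forall>aa<4. \<forall>bb<4. gg aa < gg bb \<longleftrightarrow> ([2,4,1,3]::nat list)!aa < [2,4,1,3]!bb"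
  proof (intro allI impI)
    fix aa bb :: nat assume "aa < 4" "bb < 4"
    thus "gg aa < gg bb \<longleftrightarrow> ([2,4,1,3]::nat list)!aa < [2,4,1,3]!bb"
      using four_cases[of aa] four_cases[of bb] h by auto
  qed
qed

lemma chain3142: "(\<forall>aa<4. \<forall>bb<4. (gg aa :: nat) < gg bb \<longleftrightarrow> ([3,1,4,2]::nat list)!aa < [3,1,4,2]!bb) \<longleftrightarrow> (gg 1 < gg 3 \<and> gg 3 < gg 0 \<and> gg 0 < gg 2)"
proof
  assume h: "\<forall>aa<4. \<forall>bb<4. gg aa < gg bb \<longleftrightarrow> ([3,1,4,2]::nat list)!aa < [3,1,4,2]!bb"
  show "gg 1 < gg 3 \<and> gg 3 < gg 0 \<and> gg 0 < gg 2" using h[rule_format, of 1 3] h[rule_format, of 3 0] h[rule_format, of 0 2] by simp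
next
  assume h: "gg 1 < gg 3 \<and> gg 3 < gg 0 \<and> gg 0 < gg 2"
  show "\<forall>aa<4. \<forall>bb<4. gg aa < gg bb \<longleftrightarrow> ([3,1,4,2]::nat list)!aa < [3,1,4,2]!bb"
  proof (intro allI impI)
    fix aa bb :: nat assume "aa < 4" "bb < 4"
    thus "gg aa < gg bb \<longleftrightarrow> ([3,1,4,2]::nat list)!aa < [3,1,4,2]!bb"
      using four_cases[of aa] four_cases[of bb] h by auto
  qed
qed

context
  fixes m :: nat and p :: "nat \<Rightarrow> nat" assumes pp: "p permutes {1..m}"
begin

lemma sep_Phi: "sep (Phi m p) \<longleftrightarrow> \<not> contains_pattern m p [2,4,1,3] \<and> \<not> contains_pattern m p [3,1,4,2]"
proof -
  have c1: "contains_pattern m p [2,4,1,3] \<longleftrightarrow> (\<exists>i j k l. i < j \<and> j < k \<and> k < l \<and> l < m \<and>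
      (\<forall>aa<4. \<forall>bb<4. Phi m p ! ([i,j,k,l]!aa) < Phi m p ! ([i,j,k,l]!bb) \<longleftrightarrow> ([2,4,1,3]::nat list)!aa < [2,4,1,3]!bb))"
    by (rule pat_iff[OF pp]) simp_all
  hence c1: "contains_pattern m p [2,4,1,3] \<longleftrightarrow> (\<exists>i j k l. i < j \<and> j < k \<and> k < l \<and> l < m \<and>
      (Phi m p ! k < Phi m p ! i \<and> Phi m p ! i < Phi m p ! l \<and> Phi m p ! l < Phi m p ! j))"
    unfolding chain2413 by simp
  have c2: "contains_pattern m p [3,1,4,2] \<longleftrightarrow> (\<exists>i j k l. i < j \<and> j < k \<and> k < l \<and> l < m \<and>
      (\<forall>aa<4. \<forall>bb<4. Phi m p ! ([i,j,k,l]!aa) < Phi m p ! ([i,j,k,l]!bb) \<longleftrightarrow> ([3,1,4,2]::nat list)!aa < [3,1,4,2]!bb))"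
    by (rule pat_iff[OF pp]) simp_all
  hence c2: "contains_pattern m p [3,1,4,2] \<longleftrightarrow> (\<exists>i j k l. i < j \<and> j < k \<and> k < l \<and> l < m \<and>
      (Phi m p ! j < Phi m p ! l \<and> Phi m p ! l < Phi m p ! i \<and> Phi m p ! i < Phi m p ! k))"
    unfolding chain3142 by simp
  show ?thesis unfolding c1 c2 sep_def Phi_len by blast
qed

lemma Alt_iff: "p \<in> Alt_avoid m \<longleftrightarrow> Phi m p \<in> UC 0 m"
  unfolding Alt_avoid_def UC_def using pp Phi_perms[OF pp] Phi_alt[OF pp] sep_Phi by simp

end

lemma card_Alt: "card (Alt_avoid m) = u m"
proof -
  have "bij_betw (Phi m) (Alt_avoid m) (UC 0 m)"
  proof (rule bij_betw_imageI)
    show "inj_on (Phi m) (Alt_avoid m)"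
    proof (rule inj_onI)
      fix p q assume pq: "p \<in> Alt_avoid m" "q \<in> Alt_avoid m" "Phi m p = Phi m q"
      have pp: "p permutes {1..m}" "q permutes {1..m}" using pq unfolding Alt_avoid_def by auto
      show "p = q"
      proof
        fix x
        show "p x = q x"
        proof (cases "x \<in> {1..m}")
          case True
          hence "Phi m p ! (x - 1) = Phi m q ! (x - 1)" using pq by simp
          moreover have "Phi m p ! (x - 1) = p x - 1" "Phi m q ! (x - 1) = q x - 1"
            using True Phi_nth[of "x-1" m p] Phi_nth[of "x-1" m q] by auto
          ultimately have "p x - 1 = q x - 1" by simp
          moreover have "1 \<le> p x" "1 \<le> q x" using True pv[OF pp(1)] pv[OF pp(2)] by auto
          ultimately show ?thesis by simp
        next
          case False thus ?thesis using permutes_not_in[OF pp(1)] permutes_not_in[OF pp(2)] by simp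
        qed
      qed
    qed
    show "Phi m ` Alt_avoid m = UC 0 m"
    proof
      show "Phi m ` Alt_avoid m \<subseteq> UC 0 m" using Alt_iff unfolding Alt_avoid_def by auto
      show "UC 0 m \<subseteq> Phi m ` Alt_avoid m"
      proof
        fix xs assume xs: "xs \<in> UC 0 m"
        hence xp: "xs \<in> perms m" unfolding UC_def by simp
        have lx: "length xs = m" using perms_len[OF xp] .
        define p where "p x = (if x \<in> {1..m} then Suc (xs ! (x - 1)) else x)" for x
        have pp: "p permutes {1..m}"
        proof (rule bij_imp_permutes)
          show "bij_betw p {1..m} {1..m}"
          proof (rule bij_betw_imageI)
            show "inj_on p {1..m}"
            proof (rule inj_onI)
              fix x y assume "x \<in> {1..m}" "y \<in> {1..m}" "p x = p y"
              hence "xs ! (x-1) = xs ! (y-1)" "x - 1 < length xs" "y - 1 < length xs" unfolding p_def using lx by auto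
              hence "x - 1 = y - 1" using xp unfolding perms_def by (simp add: nth_eq_iff_index_eq)
              thus "x = y" using \<open>x \<in> {1..m}\<close> \<open>y \<in> {1..m}\<close> by simp linarith
            qed
            show "p ` {1..m} = {1..m}"
            proof
              show "p ` {1..m} \<subseteq> {1..m}"
              proof
                fix y assume "y \<in> p ` {1..m}"
                then obtain x where x: "x \<in> {1..m}" "y = p x" by auto
                hence "xs ! (x - 1) < m" using perms_lt[OF xp, of "x-1"] lx by auto
                thus "y \<in> {1..m}" using x unfolding p_def by simp
              qed
              show "{1..m} \<subseteq> p ` {1..m}"
              proof
                fix y assume y: "y \<in> {1..m}"
                hence "y - 1 \<in> set xs" using xp unfolding perms_def by auto
                then obtain i where i: "i < m" "xs ! i = y - 1" using lx by (auto simp: in_set_conv_nth)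
                hence "p (Suc i) = y" unfolding p_def using y by auto
                moreover have "Suc i \<in> {1..m}" using i by auto
                ultimately show "y \<in> p ` {1..m}" by blast
              qed
            qed
          qed
          show "\<And>x. x \<notin> {1..m} \<Longrightarrow> p x = x" unfolding p_def by presburger
        qed
        have "Phi m p = xs"
          by (rule nth_equalityI) (auto simp: Phi_len lx Phi_nth p_def)
        hence "p \<in> Alt_avoid m" using Alt_iff[OF pp] xs by simp
        thus "xs \<in> Phi m ` Alt_avoid m" using \<open>Phi m p = xs\<close> by blast
      qed
    qed
  qed
  thus ?thesis unfolding u_def by (rule bij_betw_same_card)
qed


theorem theorem6p1:
  shows "R_fps = fps_X * (R_fps + 1) ^ 2 + fps_X * (R_fps + 1) ^ 3
    \<and> r_seq 0 = 1
    \<and> (\<forall>n \<ge> 1. real (r_seq n) =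
          2 / real n * (\<Sum>i = 0..n - 1. 2 ^ i * real ((2 * n) choose i) * real (n choose (i + 1))))"
proof -
  have rs: "r_seq n = u (2*n+1)" for n unfolding r_seq_def using card_Alt .
  have u1: "u 1 = 1" using u_eq[of 1] rec0[of 1] rec1[of 1] by simp
  have keyI: "(sA :: int fps) = 1 + fps_X * sA^2 + fps_X * sA^3"
    by (rule alg[OF E1 E2 E3 E4 E5 E6])
  have keyR: "(sA :: real fps) = 1 + fps_X * sA^2 + fps_X * sA^3"
    by (rule alg[OF E1 E2 E3 E4 E5 E6])
  have RA: "R_fps = sA - 1"
  proof (rule fps_ext)
    fix n show "fps_nth R_fps n = fps_nth (sA - 1 :: int fps) n"
      unfolding R_fps_def sA_def using rs u1 by simp
  qed
  have part1: "R_fps = fps_X * (R_fps + 1) ^ 2 + fps_X * (R_fps + 1) ^ 3"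
  proof -
    have "(sA :: int fps) = 1 + fps_X * sA^2 + fps_X * sA^3" by (rule keyI)
    hence h: "(sA :: int fps) - 1 = fps_X * sA^2 + fps_X * sA^3" by (simp add: algebra_simps)
    show ?thesis unfolding RA diff_add_cancel by (rule h)
  qed
  have part2: "r_seq 0 = 1" using rs u1 by simp
  have part3: "real (r_seq n) = 2 / real n * (\<Sum>i = 0..n - 1. 2 ^ i * real ((2 * n) choose i) * real (n choose (i + 1)))"
    if n: "n \<ge> 1" for n
  proof -
    define F :: "real fps" where "F = sA - 1"
    have "(sA :: real fps) = 1 + fps_X * sA^2 + fps_X * sA^3" by (rule keyR)
    hence "F = fps_X * psi F" unfolding F_def psi_def by (simp add: algebra_simps)
    hence "of_nat n * fps_nth F n = fps_nth (psi fps_X ^ n) (n - 1)" using n by (rule lagrange)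
    also have "\<dots> = 2 * (\<Sum>i = 0..n - 1. 2 ^ i * real ((2 * n) choose i) * real (n choose (i + 1)))"
      using n by (rule coef_psi)
    finally have e: "real n * real (r_seq n) = 2 * (\<Sum>i = 0..n - 1. 2 ^ i * real ((2 * n) choose i) * real (n choose (i + 1)))"
      unfolding F_def sA_def rs using n by simp
    show ?thesis using n e by (simp add: field_simps)
  qed
  show ?thesis using part1 part2 part3 by blast
qed

end
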